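(* Let $H$ be a definite Hamiltonian on $(a,b)$ in the limit circle case. Further, let $c>0$, set $r_0 := \bigl(\frac{c}{\det\Omega(a,b)}\bigr)^{\frac 12}$, let $(\hat t,\hat s)$ be the unique compatible pair for $H,r_0$ with constants $c,c$, let $K_H(t;r)$ be the corresponding kernel and $\kappa_H(r)$ be produced by the algorithm below. Then \[ \log 2\cdot\kappa_H(r)-\bigl(\log r+O(1)\bigr) \le \int_a^b K_H(t;r)\,\mathrm{d}t \le 2e\cdot\kappa_H(r)\bigl(\log r+O(1)\bigr) \] for $r>r_0$. The expressions $O(1)$ depend only on $c$ and $\operatorname{tr}\Omega(a,b)$; explicitly, \[ \int_a^b K_H(t;r)\,\mathrm{d}t\ge \kappa_H(r)\log 2-\Bigl[\log r+\log\frac{2\operatorname{tr}\Omega(a,b)}{\sqrt c}\Bigr],\qquad \int_a^b K_H(t;r)\,\mathrm{d}t\le 2e\kappa_H(r)\Bigl[\log r+\log\frac{\operatorname{tr}\Omega(a,b)}{2\sqrt c}+1\Bigr]. \]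
   Context: Let $-\infty<a<b\le\infty$. A Hamiltonian on $(a,b)$ is a measurable $H:(a,b)\to\mathbb{R}^{2\times 2}$, locally integrable on $(a,c)$ for $c<b$, with $H(t)\ge0$ a.e. and $\{H=0\}$ null; $H=\begin{pmatrix}h_1&h_3\\ h_3&h_2\end{pmatrix}$. It is in the limit circle case if $\int_a^b\operatorname{tr}H<\infty$, and definite if there is no $\phi$ with $H(t)=\operatorname{tr}H(t)\,\xi_\phi\xi_\phi^T$ a.e. on $(a,b)$, $\xi_\phi=(\cos\phi,\sin\phi)^T$. Set $\Omega(s,t)=\int_s^tH(u)\,\mathrm{d}u$, $\omega_j(s,t)=\int_s^th_j$. The (unique) compatible pair $(\hat t,\hat s)$ for $H,r_0$ with constants $c,c$ is given by $\det\Omega(a,\hat t(r))=\frac{c}{r^2}$ for $r>r_0$ and $\det\Omega(\hat s(t;r),t)=\frac{c}{r^2}$, $\hat s(t;r)\le t$, for $t\ge\hat t(r)$. Kernel: $K_H(t;r):=\mathbf{1}_{[a,\hat t(r))}(t)\frac{\omega_2(a,t)h_1(t)}{\frac{c}{r^2}+(\omega_3(a,t))^2}+\mathbf{1}_{[\hat t(r),b)}(t)\frac{h_1(t)}{\omega_1(\hat s(t;r),t)}$. Algorithm: for $r>0$ set $\sigma_0^{(r)}:=a$; if $\det\Omega(\sigma_{j-1}^{(r)},b)>\frac{c}{r^2}$, let $\sigma_j^{(r)}\in(\sigma_{j-1}^{(r)},b)$ be the unique point with $\det\Omega(\sigma_{j-1}^{(r)},\sigma_j^{(r)})=\frac{c}{r^2}$;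 otherwise set $\sigma_j^{(r)}:=b$ and $\kappa_H(r):=j$ and stop. *)

theory Defs
  imports "HOL-Analysis.Analysis"
begin

text \<open>A Hamiltonian H = [[h1,h3],[h3,h2]] on the interval (a,b), with a real and
  b an extended real (b may be +infinity). Its entries are given as three real functions.\<close>

definition hdom :: "real \<Rightarrow> ereal \<Rightarrow> real set" where
  "hdom a b = {t. a < t \<and> ereal t < b}"

definition is_hamiltonian ::
  "real \<Rightarrow> ereal \<Rightarrow> (real \<Rightarrow> real) \<Rightarrow> (real \<Rightarrow> real) \<Rightarrow> (real \<Rightarrow> real) \<Rightarrow> bool" where
  "is_hamiltonian a b h1 h2 h3 \<longleftrightarrow>
     ereal a < b \<and>
     set_borel_measurable lborel (hdom a b) h1 \<and>
     set_borel_measurable lborel (hdom a b) h2 \<and>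
     set_borel_measurable lborel (hdom a b) h3 \<and>
     (\<forall>c. a < c \<and> ereal c < b \<longrightarrow>
        set_integrable lborel {a<..<c} h1 \<and> set_integrable lborel {a<..<c} h2 \<and>
        set_integrable lborel {a<..<c} h3) \<and>
     (AE t in lborel. t \<in> hdom a b \<longrightarrow>
        0 \<le> h1 t \<and> 0 \<le> h2 t \<and> 0 \<le> h1 t * h2 t - (h3 t)\<^sup>2) \<and>
     {t \<in> hdom a b. h1 t = 0 \<and> h2 t = 0 \<and> h3 t = 0} \<in> null_sets lborel"

definition limit_circle ::
  "real \<Rightarrow> ereal \<Rightarrow> (real \<Rightarrow> real) \<Rightarrow> (real \<Rightarrow> real) \<Rightarrow> bool" where
  "limit_circle a b h1 h2 \<longleftrightarrow> (\<integral>\<^sup>+ t\<in>hdom a b. ennreal (h1 t + h2 t) \<partial>lborel) < \<infinity>"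

definition definite_ham ::
  "real \<Rightarrow> ereal \<Rightarrow> (real \<Rightarrow> real) \<Rightarrow> (real \<Rightarrow> real) \<Rightarrow> (real \<Rightarrow> real) \<Rightarrow> bool" where
  "definite_ham a b h1 h2 h3 \<longleftrightarrow>
     \<not> (\<exists>\<phi>::real. AE t in lborel. t \<in> hdom a b \<longrightarrow>
          h1 t = (h1 t + h2 t) * (cos \<phi>)\<^sup>2 \<and>
          h2 t = (h1 t + h2 t) * (sin \<phi>)\<^sup>2 \<and>
          h3 t = (h1 t + h2 t) * (cos \<phi> * sin \<phi>))"

definition omg :: "(real \<Rightarrow> real) \<Rightarrow> ereal \<Rightarrow> ereal \<Rightarrow> real" where
  "omg h s t = (LINT u:{u. s < ereal u \<and> ereal u < t}|lborel. h u)"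

definition detOm ::
  "(real \<Rightarrow> real) \<Rightarrow> (real \<Rightarrow> real) \<Rightarrow> (real \<Rightarrow> real) \<Rightarrow> ereal \<Rightarrow> ereal \<Rightarrow> real" where
  "detOm h1 h2 h3 s t = omg h1 s t * omg h2 s t - (omg h3 s t)\<^sup>2"

definition that_fn ::
  "real \<Rightarrow> ereal \<Rightarrow> (real \<Rightarrow> real) \<Rightarrow> (real \<Rightarrow> real) \<Rightarrow> (real \<Rightarrow> real) \<Rightarrow> real \<Rightarrow> real \<Rightarrow> real" where
  "that_fn a b h1 h2 h3 c r =
     (THE t. a < t \<and> ereal t < b \<and> detOm h1 h2 h3 (ereal a) (ereal t) = c / r\<^sup>2)"

definition shat_fn ::
  "real \<Rightarrow> (real \<Rightarrow> real) \<Rightarrow> (real \<Rightarrow> real) \<Rightarrow> (real \<Rightarrow> real) \<Rightarrow> real \<Rightarrow> real \<Rightarrow> real \<Rightarrow> real" where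
  "shat_fn a h1 h2 h3 c t r =
     (THE s. a \<le> s \<and> s \<le> t \<and> detOm h1 h2 h3 (ereal s) (ereal t) = c / r\<^sup>2)"

definition kernelH ::
  "real \<Rightarrow> ereal \<Rightarrow> (real \<Rightarrow> real) \<Rightarrow> (real \<Rightarrow> real) \<Rightarrow> (real \<Rightarrow> real) \<Rightarrow> real \<Rightarrow> real \<Rightarrow> real \<Rightarrow> real" where
  "kernelH a b h1 h2 h3 c t r =
     (if t < that_fn a b h1 h2 h3 c r
      then omg h2 (ereal a) (ereal t) * h1 t / (c / r\<^sup>2 + (omg h3 (ereal a) (ereal t))\<^sup>2)
      else h1 t / omg h1 (ereal (shat_fn a h1 h2 h3 c t r)) (ereal t))"

fun sigma_seq ::
  "real \<Rightarrow> ereal \<Rightarrow> (real \<Rightarrow> real) \<Rightarrow> (real \<Rightarrow> real) \<Rightarrow> (real \<Rightarrow> real) \<Rightarrow> real \<Rightarrow> real \<Rightarrow> nat \<Rightarrow> ereal" where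
  "sigma_seq a b h1 h2 h3 c r 0 = ereal a"
| "sigma_seq a b h1 h2 h3 c r (Suc j) =
     (let s = sigma_seq a b h1 h2 h3 c r j in
      if detOm h1 h2 h3 s b > c / r\<^sup>2
      then ereal (THE x. s < ereal x \<and> ereal x < b \<and> detOm h1 h2 h3 s (ereal x) = c / r\<^sup>2)
      else b)"

definition kappaH ::
  "real \<Rightarrow> ereal \<Rightarrow> (real \<Rightarrow> real) \<Rightarrow> (real \<Rightarrow> real) \<Rightarrow> (real \<Rightarrow> real) \<Rightarrow> real \<Rightarrow> real \<Rightarrow> nat" where
  "kappaH a b h1 h2 h3 c r = (LEAST j. j \<ge> 1 \<and> sigma_seq a b h1 h2 h3 c r j = b)"

end

theory Submission
  imports Defs
begin

lemma si_of_int: "integrable lborel f \<Longrightarrow> A \<in> sets borel \<Longrightarrow> set_integrable lborel A (f::real\<Rightarrow>real)"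
  unfolding set_integrable_def using integrable_mult_indicator[of A lborel f] by simp

lemma omg_alt: "omg f s t = (LINT u:einterval s t|lborel. f u)"
  by (simp add: omg_def einterval_def)

lemma omg_empty: "t \<le> s \<Longrightarrow> omg f s t = 0"
proof -
  assume "t \<le> s"
  then have "einterval s t = {}" by (auto simp: einterval_def)
  then show ?thesis by (simp add: omg_alt set_lebesgue_integral_def)
qed

lemma omg_LBINT: "s \<le> t \<Longrightarrow> omg f s t = (LBINT x=s..t. f x)"
  by (simp add: omg_alt interval_lebesgue_integral_def)

lemma omg_add:
  assumes f: "integrable lborel f" and "s \<le> u" "u \<le> t"
  shows "omg f s t = omg f s u + omg f u t"
proof -
  have "interval_lebesgue_integrable lborel (min s (min u t)) (max s (max u t)) f"
    using f by (simp add: interval_lebesgue_integrable_def si_of_int)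
  then have "(LBINT x=s..u. f x) + (LBINT x=u..t. f x) = (LBINT x=s..t. f x)"
    by (rule interval_integral_sum)
  then show ?thesis using assms by (simp add: omg_LBINT)
qed

lemma omg_nonneg:
  assumes "AE x in lborel. 0 \<le> f x"
  shows "0 \<le> omg f s t"
  unfolding omg_alt set_lebesgue_integral_def
  by (rule integral_nonneg_AE) (use assms in \<open>auto split: split_indicator\<close>)

lemma omg_lin:
  assumes "integrable lborel f" "integrable lborel g"
  shows "omg (\<lambda>x. p * f x + q * g x) s t = p * omg f s t + q * omg g s t"
proof -
  have "set_integrable lborel (einterval s t) f" "set_integrable lborel (einterval s t) g"
    using assms by (auto simp: si_of_int)
  then show ?thesis unfolding omg_alt
    by (simp add: set_integral_add set_integrable_mult_right)
qed

lemma omg_cont: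
  assumes f: "integrable lborel f"
  shows "continuous_on {s..q} (\<lambda>t. omg f (ereal s) (ereal t))"
proof -
  have i: "f integrable_on {s..q}"
    using f by (meson integrable_on_lborel integrable_on_subinterval subset_UNIV)
  have "continuous_on {s..q} (\<lambda>t. integral {s..t} f)"
    by (rule indefinite_integral_continuous_1[OF i])
  moreover have "omg f (ereal s) (ereal t) = integral {s..t} f" if "t \<in> {s..q}" for t
  proof -
    have "set_integrable lborel {s..t} f"
      using f by (auto simp: si_of_int)
    then show ?thesis using that by (simp add: omg_LBINT interval_integral_eq_integral)
  qed
  ultimately show ?thesis using continuous_on_cong by (smt (verit))
qed

lemma omg_approx:
  assumes "ereal s < t"
  obtains X :: "nat \<Rightarrow> real" where "\<And>i. s < X i" "\<And>i. ereal (X i) < t" "incseq X"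
    "\<And>f. integrable lborel f \<Longrightarrow> (\<lambda>i. omg f (ereal s) (ereal (X i))) \<longlonglongrightarrow> omg f (ereal s) t"
proof -
  obtain X :: "nat \<Rightarrow> real" where X: "incseq X" "\<And>i. ereal s < X i" "\<And>i. X i < t" "(\<lambda>i. ereal (X i)) \<longlonglongrightarrow> t"
    using ereal_incseq_approx[OF assms] by blast
  have U: "(\<Union>i. einterval s (X i)) = einterval s t"
  proof safe
    fix x i assume "x \<in> einterval (ereal s) (ereal (X i))"
    then show "x \<in> einterval s t" using X(3)[of i] by (auto simp: einterval_def intro: order.strict_trans[of "ereal x" "ereal (X i)"])
  next
    fix x assume "x \<in> einterval s t"
    then have "s < x" "ereal x < t" by (auto simp: einterval_def)
    with order_tendstoD(1)[OF X(4) \<open>ereal x < t\<close>] obtain i where "x < X i"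
      by (auto simp: eventually_sequentially)
    then show "x \<in> (\<Union>i. einterval (ereal s) (ereal (X i)))" using \<open>s < x\<close> by (auto simp: einterval_def)
  qed
  have inc: "incseq (\<lambda>i. einterval (ereal s) (ereal (X i)))"
    using X(1) by (auto simp: incseq_def einterval_def intro: order.strict_trans2)
  show ?thesis
  proof (rule that)
    fix i show "s < X i" using X(2)[of i] by simp
    show "ereal (X i) < t" by (rule X(3))
    show "incseq X" by (rule X(1))
  next
    fix f :: "real \<Rightarrow> real" assume f: "integrable lborel f"
    have "(\<lambda>i. LINT x:einterval (ereal s) (ereal (X i))|lborel. f x) \<longlonglongrightarrow> (LINT x:(\<Union>i. einterval (ereal s) (ereal (X i)))|lborel. f x)"
      by (rule set_integral_cont_up) (use inc f in \<open>auto simp: si_of_int\<close>)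
    then show "(\<lambda>i. omg f (ereal s) (ereal (X i))) \<longlonglongrightarrow> omg f (ereal s) t"
      unfolding U by (simp add: omg_alt)
  qed
qed

lemma nn_omg:
  assumes f: "integrable lborel f" and nn: "AE x in lborel. 0 \<le> f x"
  shows "(\<integral>\<^sup>+u. ennreal (f u) * indicator (einterval p q) u \<partial>lborel) = ennreal (omg f p q)"
proof -
  have "(\<integral>\<^sup>+u. ennreal (f u) * indicator (einterval p q) u \<partial>lborel) = (\<integral>\<^sup>+u. ennreal (indicator (einterval p q) u * f u) \<partial>lborel)"
    by (rule nn_integral_cong) (auto split: split_indicator)
  also have "\<dots> = ennreal (\<integral>u. indicator (einterval p q) u * f u \<partial>lborel)"
    by (rule nn_integral_eq_integral) (use f nn si_of_int[of f "einterval p q"] in \<open>auto simp: set_integrable_def split: split_indicator\<close>)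
  finally show ?thesis by (simp add: omg_alt set_lebesgue_integral_def)
qed

lemma omg_mono:
  assumes f: "integrable lborel f" and nn: "AE x in lborel. 0 \<le> f x" and "s \<le> u" "u \<le> t"
  shows "omg f s u \<le> omg f s t"
  using omg_add[OF f assms(3,4)] omg_nonneg[OF nn, of u t] by simp


lemma cov:
  fixes f :: "real \<Rightarrow> real" and g :: "real \<Rightarrow> ennreal" and s0 s :: real and t :: ereal
  assumes f: "integrable lborel f" and nn: "AE x in lborel. 0 \<le> f x"
    and s0s: "s0 \<le> s" and st: "ereal s < t" and g: "g \<in> borel_measurable borel"
  shows "(\<integral>\<^sup>+u. ennreal (f u) * g (omg f (ereal s0) (ereal u)) * indicator (einterval s t) u \<partial>lborel) =
         (\<integral>\<^sup>+v. g v * indicator {omg f (ereal s0) (ereal s) <..< omg f (ereal s0) t} v \<partial>lborel)"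
proof -
  define F where "F u = omg f (ereal s0) (ereal u)" for u
  define Ft where "Ft = omg f (ereal s0) t"
  define F' where "F' u = (if ereal u < t then F u else Ft)" for u
  have Fmono: "F x \<le> F y" if "x \<le> y" for x y
  proof (cases "s0 \<le> x")
    case True then show ?thesis unfolding F_def using omg_mono[OF f nn, of s0 x y] that by simp
  next
    case False then show ?thesis unfolding F_def using omg_empty[of "ereal x" "ereal s0" f] omg_nonneg[OF nn] by simp
  qed
  have FFt: "F x \<le> Ft" if "ereal x \<le> t" for x
  proof (cases "s0 \<le> x")
    case True then show ?thesis unfolding F_def Ft_def using omg_mono[OF f nn, of s0 x t] that by simp
  next
    case False then show ?thesis unfolding F_def Ft_def using omg_empty[of "ereal x" "ereal s0" f] omg_nonneg[OF nn] by simp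
  qed
  have F'mono: "mono F'"
    unfolding mono_def
  proof (intro allI impI)
    fix x y :: real assume xy: "x \<le> y"
    then have "ereal x \<le> ereal y" by simp
    show "F' x \<le> F' y"
    proof (cases "ereal y < t")
      case True
      then have "ereal x < t" using \<open>ereal x \<le> ereal y\<close> by (meson order.strict_trans1)
      then show ?thesis using True Fmono[OF xy] unfolding F'_def by simp
    next
      case False
      then show ?thesis using FFt[of x] unfolding F'_def by (auto simp: less_imp_le)
    qed
  qed
  have F'meas[measurable]: "F' \<in> borel_measurable borel" by (rule borel_measurable_mono[OF F'mono])
  have Fadd: "omg f (ereal y) t = Ft - F y" if "s0 \<le> y" "ereal y \<le> t" for y
    using omg_add[OF f, of "ereal s0" "ereal y" t] that unfolding F_def Ft_def by simp
  have Fcont: "continuous_on {p..q} F" if "s0 \<le> p" for p q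
    unfolding F_def by (rule continuous_on_subset[OF omg_cont[OF f, of s0 q]]) (use that in auto)
  define dens where "dens u = ennreal (f u) * indicator (einterval s t) u" for u
  have dens_meas[measurable]: "dens \<in> borel_measurable lborel"
    unfolding dens_def using f by (auto intro!: borel_measurable_integrable)
  define M where "M = density lborel dens"
  define N where "N = density lborel (indicator {F s <..< Ft} :: real \<Rightarrow> ennreal)"
  have F'M: "F' \<in> measurable M borel" unfolding M_def by simp
  have key: "emeasure M (F' -` {x<..}) = ennreal (Ft - max (F s) x)" for x
  proof -
    have pre: "F' -` {x<..} \<in> sets lborel" using measurable_sets[OF F'meas, of "{x<..}"] by simp
    have em: "emeasure M (F' -` {x<..}) = (\<integral>\<^sup>+u. dens u * indicator (F' -` {x<..}) u \<partial>lborel)"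
      unfolding M_def by (rule emeasure_density[OF dens_meas pre])
    have gen: "(\<integral>\<^sup>+u. dens u * indicator (F' -` {x<..}) u \<partial>lborel) = ennreal (omg f (ereal y) t)"
      if y: "s \<le> y" "ereal y \<le> t" and iff: "\<And>u. u \<in> einterval s t \<Longrightarrow> (x < F u \<longleftrightarrow> y < u)" for y
    proof -
      have "(\<integral>\<^sup>+u. dens u * indicator (F' -` {x<..}) u \<partial>lborel) = (\<integral>\<^sup>+u. ennreal (f u) * indicator (einterval y t) u \<partial>lborel)"
      proof (rule nn_integral_cong)
        fix u
        show "dens u * indicator (F' -` {x<..}) u = ennreal (f u) * indicator (einterval (ereal y) t) u"
        proof (cases "u \<in> einterval s t")
          case True
          then have "F' u = F u" unfolding F'_def by (auto simp: einterval_def)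
          then show ?thesis using True iff[OF True] y unfolding dens_def by (auto simp: einterval_def split: split_indicator)
        next
          case False
          then have "u \<notin> einterval y t" using y by (auto simp: einterval_def)
          then show ?thesis using False unfolding dens_def by simp
        qed
      qed
      also have "\<dots> = ennreal (omg f (ereal y) t)" by (rule nn_omg[OF f nn])
      finally show ?thesis .
    qed
    consider "x < F s" | "Ft \<le> x" | "F s \<le> x" "x < Ft" by linarith
    then show ?thesis
    proof cases
      case 1
      have "(\<integral>\<^sup>+u. dens u * indicator (F' -` {x<..}) u \<partial>lborel) = ennreal (omg f (ereal s) t)"
        by (rule gen) (use st 1 Fmono in \<open>auto simp: einterval_def intro: less_le_trans\<close>)
      then show ?thesis using em 1 Fadd[of s] s0s st by simp
    next
      case 2
      have z: "(\<lambda>u. dens u * indicator (F' -` {x<..}) u) = (\<lambda>u. 0)"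
      proof (rule ext)
        fix u
        show "dens u * indicator (F' -` {x<..}) u = 0"
        proof (cases "u \<in> einterval s t")
          case True
          then have "F' u = F u" "ereal u \<le> t" unfolding F'_def by (auto simp: einterval_def)
          then have "F' u \<le> x" using FFt[of u] 2 by simp
          then show ?thesis by (simp split: split_indicator)
        next
          case False then show ?thesis by (simp add: dens_def)
        qed
      qed
      have "(\<integral>\<^sup>+u. dens u * indicator (F' -` {x<..}) u \<partial>lborel) = 0" by (simp only: z) simp
      then show ?thesis using em 2 Fmono[of s] FFt[of s] st by (simp add: ennreal_neg)
    next
      case 3
      have s0t: "ereal s0 < t" using s0s st by (meson ereal_less_eq(3) order.strict_trans1)
      obtain X where X1: "\<And>i. s0 < X i" and X2: "\<And>i. ereal (X i) < t" and "incseq X"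
        and X4: "\<And>f. integrable lborel f \<Longrightarrow> (\<lambda>i. omg f (ereal s0) (ereal (X i))) \<longlonglongrightarrow> omg f (ereal s0) t"
        using omg_approx[OF s0t] by blast
      note X = X1 X2 X4[OF f]
      from order_tendstoD(1)[OF X(3), of x] 3 obtain i where "x < F (X i)"
        unfolding F_def Ft_def by (auto simp: eventually_sequentially)
      define w where "w = max s (X i)"
      have w: "s \<le> w" "ereal w < t" "x < F w"
        using X(2)[of i] st \<open>x < F (X i)\<close> Fmono[of "X i" w] by (auto simp: w_def)
      define S where "S = {u \<in> {s..w}. F u \<le> x}"
      have Scl: "closed S" unfolding S_def
        by (rule continuous_on_closed_Collect_le[OF Fcont continuous_on_const closed_atLeastAtMost]) (use s0s in simp)
      have Sne: "S \<noteq> {}" using 3 w unfolding S_def by auto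
      have Sbdd: "bdd_above S" unfolding S_def by (auto intro: bdd_aboveI[of _ w])
      define y where "y = Sup S"
      have yS: "y \<in> S" unfolding y_def by (rule closed_contains_Sup[OF Sne Sbdd Scl])
      have ub: "u \<le> y" if "u \<in> S" for u unfolding y_def by (rule cSup_upper[OF that Sbdd])
      obtain z where z: "s \<le> z" "z \<le> w" "F z = x"
        using IVT'[of F s x w] 3 w Fcont[of s w] s0s by auto
      have Fy: "F y = x" using yS ub[of z] z Fmono[of z y] unfolding S_def by auto
      have yw: "s \<le> y" "y \<le> w" using yS unfolding S_def by auto
      have "ereal y \<le> t" using yw(2) w(2) by (meson less_imp_le order.trans ereal_less_eq(3))
      note y = yw(1) this
      have "(\<integral>\<^sup>+u. dens u * indicator (F' -` {x<..}) u \<partial>lborel) = ennreal (omg f (ereal y) t)"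
      proof (rule gen[OF y])
        fix u assume u: "u \<in> einterval s t"
        show "x < F u \<longleftrightarrow> y < u"
        proof
          assume "x < F u" then show "y < u" using Fmono[of u y] Fy by (cases "u \<le> y") auto
        next
          assume "y < u"
          show "x < F u"
          proof (cases "u \<le> w")
            case True
            then have "u \<notin> S" using ub[of u] \<open>y < u\<close> by auto
            then show ?thesis using True u unfolding S_def by (auto simp: einterval_def)
          next
            case False then show ?thesis using Fmono[of w u] w by auto
          qed
        qed
      qed
      then show ?thesis using em 3 Fadd[of y] y s0s Fy by simp
    qed
  qed
  have distrN: "distr M borel F' = N"
  proof (rule measure_eqI_lessThan)
    show "sets (distr M borel F') = sets borel" by simp
    show "sets N = sets borel" unfolding N_def by simp
    fix x
    have "emeasure (distr M borel F') {x<..} = emeasure M (F' -` {x<..})"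
      using emeasure_distr[OF F'M, of "{x<..}"] by (simp add: M_def)
    then have e1: "emeasure (distr M borel F') {x<..} = ennreal (Ft - max (F s) x)"
      using key[of x] by simp
    then show "emeasure (distr M borel F') {x<..} < \<infinity>" by simp
    have "emeasure N {x<..} = (\<integral>\<^sup>+v. indicator {F s <..< Ft} v * indicator {x<..} v \<partial>lborel)"
      unfolding N_def by (rule emeasure_density) auto
    also have "\<dots> = (\<integral>\<^sup>+v. indicator {max (F s) x <..< Ft} v \<partial>lborel)"
      by (rule nn_integral_cong) (auto split: split_indicator)
    also have "\<dots> = ennreal (Ft - max (F s) x)"
      by (cases "max (F s) x \<le> Ft") (auto simp: ennreal_neg)
    finally show "emeasure (distr M borel F') {x<..} = emeasure N {x<..}" using e1 by simp
  qed
  have "(\<integral>\<^sup>+u. ennreal (f u) * g (F u) * indicator (einterval s t) u \<partial>lborel) = (\<integral>\<^sup>+u. dens u * g (F' u) \<partial>lborel)"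
    by (rule nn_integral_cong) (auto simp: dens_def F'_def einterval_def mult_ac split: split_indicator)
  also have "\<dots> = (\<integral>\<^sup>+u. g (F' u) \<partial>M)"
    unfolding M_def by (rule nn_integral_density[symmetric]) (use g in auto)
  also have "\<dots> = (\<integral>\<^sup>+v. g v \<partial>distr M borel F')"
    by (rule nn_integral_distr[symmetric]) (use F'M g in auto)
  also have "\<dots> = (\<integral>\<^sup>+v. indicator {F s <..< Ft} v * g v \<partial>lborel)"
    unfolding distrN N_def by (rule nn_integral_density) (use g in auto)
  finally show ?thesis unfolding F_def Ft_def by (simp add: mult_ac)
qed


lemma quad_nonneg:
  fixes p q r x y :: real
  assumes "0 \<le> p" "0 \<le> q" "r^2 \<le> p * q"
  shows "0 \<le> p * x^2 + 2 * r * x * y + q * y^2"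
proof (cases "p = 0")
  case True
  then have "r = 0" using assms by simp
  then show ?thesis using True assms by simp
next
  case False
  then have "0 < p" using assms by simp
  have "p * (p * x^2 + 2 * r * x * y + q * y^2) = (p*x + r*y)^2 + (p*q - r^2) * y^2"
    by (simp add: algebra_simps power2_eq_square)
  also have "\<dots> \<ge> 0" using assms by simp
  finally show ?thesis using \<open>0 < p\<close> by (simp add: zero_le_mult_iff)
qed

lemma quad_psd:
  fixes A B C :: real
  assumes "\<And>x y. 0 \<le> A * x^2 + 2 * B * x * y + C * y^2"
  shows "0 \<le> A" "0 \<le> C" "B^2 \<le> A * C"
proof -
  show "0 \<le> A" using assms[of 1 0] by simp
  show "0 \<le> C" using assms[of 0 1] by simp
  show "B^2 \<le> A * C"
  proof (cases "A = 0")
    case True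
    show ?thesis
    proof (rule ccontr)
      assume "\<not> ?thesis"
      then have "B \<noteq> 0" using True by simp
      have "0 \<le> 2 * B * (-(C+1)/(2*B)) * 1 + C * 1^2" using assms[of "-(C+1)/(2*B)" 1] True by simp
      also have "\<dots> = -1" using \<open>B \<noteq> 0\<close> by (simp add: field_simps)
      finally show False by simp
    qed
  next
    case False
    then have Ap: "0 < A" using \<open>0 \<le> A\<close> by simp
    have "0 \<le> A * (-B)^2 + 2 * B * (-B) * A + C * A^2" using assms[of "-B" A] .
    also have "\<dots> = A * (A * C - B^2)" by (simp add: algebra_simps power2_eq_square)
    finally show ?thesis using Ap by (simp add: zero_le_mult_iff)
  qed
qed

lemma cross_nonneg:
  fixes A1 A2 A3 B1 B2 B3 :: real
  assumes "0 \<le> A1" "0 \<le> A2" "A3^2 \<le> A1 * A2" "0 \<le> B1" "0 \<le> B2" "B3^2 \<le> B1 * B2"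
  shows "2 * A3 * B3 \<le> A1 * B2 + A2 * B1"
proof -
  have "(2 * A3 * B3)^2 = 4 * (A3^2 * B3^2)" by (simp add: power2_eq_square)
  also have "\<dots> \<le> 4 * ((A1 * A2) * (B1 * B2))"
    using assms by (intro mult_left_mono mult_mono) auto
  also have "\<dots> \<le> (A1 * B2 + A2 * B1)^2"
    using zero_le_power2[of "A1 * B2 - A2 * B1"] by (simp add: algebra_simps power2_eq_square)
  finally show ?thesis by (rule power2_le_imp_le) (use assms in simp)
qed

lemma cross_pos:
  fixes A1 A2 A3 B1 B2 B3 :: real
  assumes "0 \<le> A1" "0 \<le> A2" "A3^2 < A1 * A2" "0 \<le> B1" "0 \<le> B2" "B3^2 \<le> B1 * B2" "0 < B1 + B2"
  shows "2 * A3 * B3 < A1 * B2 + A2 * B1"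
proof -
  have A12: "0 < A1" "0 < A2"
    using assms(1-3) zero_le_power2[of A3] by (auto simp: less_le)
  consider "B1 = 0" | "B2 = 0" | "0 < B1" "0 < B2" using assms by linarith
  then show ?thesis
  proof cases
    case 1
    then have "B3 = 0" using assms by simp
    then show ?thesis using 1 assms A12 by simp
  next
    case 2
    then have "B3 = 0" using assms by simp
    then show ?thesis using 2 assms A12 by simp
  next
    case 3
    have "(2 * A3 * B3)^2 = 4 * (A3^2 * B3^2)" by (simp add: power2_eq_square)
    also have "\<dots> \<le> 4 * (A3^2 * (B1 * B2))"
      using assms by (intro mult_left_mono) auto
    also have "\<dots> < 4 * ((A1 * A2) * (B1 * B2))"
      using assms 3 by (intro mult_strict_left_mono mult_strict_right_mono) auto
    also have "\<dots> \<le> (A1 * B2 + A2 * B1)^2"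
      using zero_le_power2[of "A1 * B2 - A2 * B1"] by (simp add: algebra_simps power2_eq_square)
    finally show ?thesis by (rule power2_less_imp_less) (use assms in simp)
  qed
qed


locale ham =
  fixes a :: real and b :: ereal and k1 k2 k3 :: "real \<Rightarrow> real"
  assumes ab: "ereal a < b"
    and int1: "integrable lborel k1" and int2: "integrable lborel k2" and int3: "integrable lborel k3"
    and nn1: "AE x in lborel. 0 \<le> k1 x" and nn2: "AE x in lborel. 0 \<le> k2 x"
    and psd: "AE x in lborel. (k3 x)^2 \<le> k1 x * k2 x"
    and pos: "AE x in lborel. x \<in> einterval a b \<longrightarrow> 0 < k1 x + k2 x"
begin

abbreviation "w1 \<equiv> omg k1"
abbreviation "w2 \<equiv> omg k2"
abbreviation "w3 \<equiv> omg k3"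
abbreviation "D \<equiv> detOm k1 k2 k3"

lemma D_def': "D s t = w1 s t * w2 s t - (w3 s t)^2"
  by (simp add: detOm_def)

lemma W_psd: "0 \<le> w1 s t" "0 \<le> w2 s t" "(w3 s t)^2 \<le> w1 s t * w2 s t"
proof -
  have "0 \<le> w1 s t * x^2 + 2 * w3 s t * x * y + w2 s t * y^2" for x y
  proof -
    have i: "integrable lborel (\<lambda>u. 2 * x * y * k3 u + y^2 * k2 u)"
      using int2 int3 by auto
    have "omg (\<lambda>u. x^2 * k1 u + 1 * (2 * x * y * k3 u + y^2 * k2 u)) s t
       = x^2 * w1 s t + 1 * omg (\<lambda>u. 2 * x * y * k3 u + y^2 * k2 u) s t"
      by (rule omg_lin[OF int1 i])
    also have "omg (\<lambda>u. 2 * x * y * k3 u + y^2 * k2 u) s t = 2 * x * y * w3 s t + y^2 * w2 s t"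
      by (rule omg_lin[OF int3 int2])
    finally have eq: "omg (\<lambda>u. x^2 * k1 u + 1 * (2 * x * y * k3 u + y^2 * k2 u)) s t
        = w1 s t * x^2 + 2 * w3 s t * x * y + w2 s t * y^2" by (simp add: algebra_simps)
    have "0 \<le> omg (\<lambda>u. x^2 * k1 u + 1 * (2 * x * y * k3 u + y^2 * k2 u)) s t"
    proof (rule omg_nonneg)
      show "AE u in lborel. 0 \<le> x^2 * k1 u + 1 * (2 * x * y * k3 u + y^2 * k2 u)"
        using nn1 nn2 psd
      proof eventually_elim
        case (elim u)
        show ?case using quad_nonneg[OF elim, of x y] by (simp add: algebra_simps)
      qed
    qed
    then show ?thesis using eq by simp
  qed
  from quad_psd[OF this] show "0 \<le> w1 s t" "0 \<le> w2 s t" "(w3 s t)^2 \<le> w1 s t * w2 s t" by auto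
qed

lemma det_sum: "(A1+B1)*(A2+B2) - (A3+B3)^2 = (A1*A2 - A3^2) + (B1*B2 - B3^2) + (A1*B2 + A2*B1 - 2*A3*B3)"
  for A1 A2 A3 B1 B2 B3 :: real
  by (simp add: algebra_simps power2_eq_square)

lemma D_split: "s \<le> u \<Longrightarrow> u \<le> t \<Longrightarrow>
   D s t = D s u + D u t + (w1 s u * w2 u t + w2 s u * w1 u t - 2 * w3 s u * w3 u t)"
  using omg_add[OF int1, of s u t] omg_add[OF int2, of s u t] omg_add[OF int3, of s u t]
  by (simp only: D_def' det_sum)

lemma D_nonneg: "0 \<le> D s t"
  using W_psd[of s t] by (simp add: D_def')

lemma W_add:
  "s \<le> u \<Longrightarrow> u \<le> t \<Longrightarrow> w1 s t = w1 s u + w1 u t"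
  and "s \<le> u \<Longrightarrow> u \<le> t \<Longrightarrow> w2 s t = w2 s u + w2 u t"
  and "s \<le> u \<Longrightarrow> u \<le> t \<Longrightarrow> w3 s t = w3 s u + w3 u t"
    apply (erule (1) omg_add[OF int1])
   apply (erule (1) omg_add[OF int2])
  by (erule (1) omg_add[OF int3])

lemma D_superadd:
  assumes "s \<le> u" "u \<le> t"
  shows "D s u + D u t \<le> D s t"
proof -
  have "2 * w3 s u * w3 u t \<le> w1 s u * w2 u t + w2 s u * w1 u t"
    by (rule cross_nonneg) (rule W_psd)+
  then show ?thesis using D_split[OF assms] by simp
qed

lemma D_mono_right: "s \<le> u \<Longrightarrow> u \<le> t \<Longrightarrow> D s u \<le> D s t"
  using D_superadd[of s u t] D_nonneg[of u t] by simp

lemma D_mono_left: "s \<le> u \<Longrightarrow> u \<le> t \<Longrightarrow> D u t \<le> D s t"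
  using D_superadd[of s u t] D_nonneg[of s u] by simp

lemma D_mono: "s \<le> s' \<Longrightarrow> s' \<le> t' \<Longrightarrow> t' \<le> t \<Longrightarrow> D s' t' \<le> D s t"
  using D_mono_right[of s' t' t] D_mono_left[of s s' t] by (meson order.trans)

lemma tr_pos:
  assumes "ereal a \<le> p" "p < q" "p < b"
  shows "0 < w1 p q + w2 p q"
proof -
  obtain r where r: "p < ereal r" "ereal r < min q b" using ereal_dense2[of p "min q b"] assms by auto
  obtain p' where p': "p = ereal p'" using assms ab by (cases p) auto
  have sub: "{p'<..<r} \<subseteq> einterval p q \<inter> einterval a b"
  proof
    fix x assume x: "x \<in> {p'<..<r}"
    then have "ereal x < ereal r" by simp
    moreover have "ereal r < q" "ereal r < b" using r by auto
    ultimately have "ereal x < q" "ereal x < b" by (meson order.strict_trans)+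
    moreover have "a < x" using x p' assms(1) by simp
    ultimately show "x \<in> einterval p q \<inter> einterval a b" using x p' by (auto simp: einterval_def)
  qed
  have eq: "w1 p q + w2 p q = omg (\<lambda>u. 1 * k1 u + 1 * k2 u) p q"
    using omg_lin[OF int1 int2, of 1 1 p q] by simp
  have "0 \<le> omg (\<lambda>u. 1 * k1 u + 1 * k2 u) p q" by (rule omg_nonneg) (use nn1 nn2 in auto)
  moreover have "omg (\<lambda>u. 1 * k1 u + 1 * k2 u) p q \<noteq> 0"
  proof
    assume z: "omg (\<lambda>u. 1 * k1 u + 1 * k2 u) p q = 0"
    have ii: "integrable lborel (\<lambda>u. indicator (einterval p q) u * (k1 u + k2 u))"
      using si_of_int[of "\<lambda>u. k1 u + k2 u" "einterval p q"] int1 int2 by (auto simp: set_integrable_def)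
    have "(\<integral>u. indicator (einterval p q) u * (k1 u + k2 u) \<partial>lborel) = 0"
      using z by (simp add: omg_alt set_lebesgue_integral_def)
    moreover have nnAE: "AE u in lborel. 0 \<le> indicator (einterval p q) u * (k1 u + k2 u)"
      using nn1 nn2 by eventually_elim (auto split: split_indicator)
    ultimately have "AE u in lborel. indicator (einterval p q) u * (k1 u + k2 u) = 0"
      using integral_nonneg_eq_0_iff_AE[OF ii nnAE] by simp
    then have "AE u in lborel. u \<notin> {p'<..<r}"
      using pos
    proof eventually_elim
      case (elim u)
      show ?case using elim subsetD[OF sub, of u] by (auto split: split_indicator)
    qed
    then have "{p'<..<r} \<in> null_sets lborel"
      using AE_iff_null_sets[of "{p'<..<r}" lborel] by simp
    then have "emeasure lborel {p'<..<r} = 0" by auto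
    moreover have "p' < r" using r p' by simp
    ultimately show False by simp
  qed
  ultimately show ?thesis using eq by simp
qed

lemma D_strict_right:
  assumes "ereal a \<le> s" "s \<le> u" "u < t" "u < b" "0 < D s u"
  shows "D s u < D s t"
proof -
  have "2 * w3 s u * w3 u t < w1 s u * w2 u t + w2 s u * w1 u t"
    by (rule cross_pos) (use W_psd[of s u] W_psd[of u t] assms tr_pos[of u t] in \<open>auto simp: D_def'\<close>)
  then show ?thesis using D_split[OF assms(2) less_imp_le[OF assms(3)]] D_nonneg[of u t] by simp
qed

lemma D_strict_left:
  assumes "ereal a \<le> s" "s < u" "u \<le> t" "s < b" "0 < D u t"
  shows "D u t < D s t"
proof -
  have "2 * w3 u t * w3 s u < w1 u t * w2 s u + w2 u t * w1 s u"
    by (rule cross_pos) (use W_psd[of s u] W_psd[of u t] assms tr_pos[of s u] in \<open>auto simp: D_def'\<close>)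
  then show ?thesis using D_split[OF less_imp_le[OF assms(2)] assms(3)] D_nonneg[of s u] by (simp add: mult_ac)
qed

end

context ham begin

lemma W_same: "w1 s s = 0" "w2 s s = 0" "w3 s s = 0"
  by (simp_all add: omg_empty)

lemma D_same: "D s s = 0"
  by (simp add: D_def' W_same)

lemma D_cont_right: "continuous_on {p..q} (\<lambda>t. D (ereal p) (ereal t))"
proof -
  have c1: "continuous_on {p..q} (\<lambda>t. w1 (ereal p) (ereal t))" by (rule omg_cont[OF int1])
  have c2: "continuous_on {p..q} (\<lambda>t. w2 (ereal p) (ereal t))" by (rule omg_cont[OF int2])
  have c3: "continuous_on {p..q} (\<lambda>t. w3 (ereal p) (ereal t))" by (rule omg_cont[OF int3])
  have "continuous_on {p..q} (\<lambda>t. w1 (ereal p) (ereal t) * w2 (ereal p) (ereal t) - (w3 (ereal p) (ereal t))^2)"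
    by (rule continuous_on_diff[OF continuous_on_mult[OF c1 c2] continuous_on_power[OF c3]])
  then show ?thesis by (simp add: D_def')
qed

lemma D_cont_left: "continuous_on {p..t} (\<lambda>s. D (ereal s) (ereal t))"
proof -
  have eq: "D (ereal s) (ereal t) = (w1 p t - w1 p s) * (w2 p t - w2 p s) - (w3 p t - w3 p s)^2"
    if "s \<in> {p..t}" for s
    using that omg_add[OF int1, of "ereal p" "ereal s" "ereal t"] omg_add[OF int2, of "ereal p" "ereal s" "ereal t"]
      omg_add[OF int3, of "ereal p" "ereal s" "ereal t"] by (simp add: D_def')
  have c1: "continuous_on {p..t} (\<lambda>s. w1 (ereal p) (ereal s))" by (rule omg_cont[OF int1])
  have c2: "continuous_on {p..t} (\<lambda>s. w2 (ereal p) (ereal s))" by (rule omg_cont[OF int2])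
  have c3: "continuous_on {p..t} (\<lambda>s. w3 (ereal p) (ereal s))" by (rule omg_cont[OF int3])
  have "continuous_on {p..t} (\<lambda>s. (w1 p t - w1 p s) * (w2 p t - w2 p s) - (w3 p t - w3 p s)^2)"
    by (rule continuous_on_diff continuous_on_mult continuous_on_power continuous_on_const c1 c2 c3)+
  then show ?thesis by (rule continuous_on_eq) (simp add: eq)
qed

lemma D_lim:
  assumes "ereal p < b" "\<delta> < D (ereal p) b"
  shows "\<exists>x. p < x \<and> ereal x < b \<and> \<delta> < D (ereal p) (ereal x)"
proof -
  obtain X where X1: "\<And>i. p < X i" and X2: "\<And>i. ereal (X i) < b" and "incseq X"
    and X4: "\<And>f. integrable lborel f \<Longrightarrow> (\<lambda>i. omg f (ereal p) (ereal (X i))) \<longlonglongrightarrow> omg f (ereal p) b"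
    using omg_approx[OF assms(1)] by blast
  have "(\<lambda>i. w1 (ereal p) (ereal (X i)) * w2 (ereal p) (ereal (X i)) - (w3 (ereal p) (ereal (X i)))^2)
     \<longlonglongrightarrow> w1 (ereal p) b * w2 (ereal p) b - (w3 (ereal p) b)^2"
    by (intro tendsto_diff tendsto_mult tendsto_power X4 int1 int2 int3)
  then have "(\<lambda>i. D (ereal p) (ereal (X i))) \<longlonglongrightarrow> D (ereal p) b" by (simp add: D_def')
  from order_tendstoD(1)[OF this assms(2)] obtain i where "\<delta> < D (ereal p) (ereal (X i))"
    by (auto simp: eventually_sequentially)
  then show ?thesis using X1 X2 by blast
qed

lemma exu_right:
  assumes "a \<le> p" "ereal p < b" "0 < \<delta>" "\<delta> < D (ereal p) b"
  shows "\<exists>!x. ereal p < ereal x \<and> ereal x < b \<and> D (ereal p) (ereal x) = \<delta>"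
proof -
  obtain x0 where x0: "p < x0" "ereal x0 < b" "\<delta> < D (ereal p) (ereal x0)"
    using D_lim[OF assms(2,4)] by blast
  have "\<exists>x\<ge>p. x \<le> x0 \<and> D (ereal p) (ereal x) = \<delta>"
  proof (rule IVT'[of "\<lambda>t. D (ereal p) (ereal t)"])
    show "D (ereal p) (ereal p) \<le> \<delta>" using D_same[of "ereal p"] assms(3) by simp
    show "\<delta> \<le> D (ereal p) (ereal x0)" using x0(3) by simp
    show "p \<le> x0" using x0(1) by simp
    show "continuous_on {p..x0} (\<lambda>t. D (ereal p) (ereal t))" by (rule D_cont_right)
  qed
  then obtain x where x: "p \<le> x" "x \<le> x0" "D (ereal p) (ereal x) = \<delta>" by blast
  have "x \<noteq> p" using x(3) D_same[of "ereal p"] assms(3) by auto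
  moreover have "ereal x < b" using x(2) x0(2) by (meson ereal_less_eq(3) le_less_trans)
  ultimately have ex: "ereal p < ereal x \<and> ereal x < b \<and> D (ereal p) (ereal x) = \<delta>"
    using x by simp
  show ?thesis
  proof (rule ex1I[of _ x])
    show "ereal p < ereal x \<and> ereal x < b \<and> D (ereal p) (ereal x) = \<delta>" by (rule ex)
    fix y assume y: "ereal p < ereal y \<and> ereal y < b \<and> D (ereal p) (ereal y) = \<delta>"
    show "y = x"
    proof (rule ccontr)
      assume "y \<noteq> x"
      then consider "y < x" | "x < y" by linarith
      then show False
      proof cases
        case 1
        have "D (ereal p) (ereal y) < D (ereal p) (ereal x)"
          by (rule D_strict_right) (use y ex 1 assms in simp_all)
        then show False using y ex by simp
      next
        case 2
        have "D (ereal p) (ereal x) < D (ereal p) (ereal y)"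
          by (rule D_strict_right) (use y ex 2 assms in simp_all)
        then show False using y ex by simp
      qed
    qed
  qed
qed

lemma exu_left:
  assumes "a \<le> t" "ereal t < b" "0 < \<delta>" "\<delta> \<le> D (ereal a) (ereal t)"
  shows "\<exists>!s. a \<le> s \<and> s \<le> t \<and> D (ereal s) (ereal t) = \<delta>"
proof -
  have "\<exists>s\<ge>a. s \<le> t \<and> D (ereal s) (ereal t) = \<delta>"
  proof (rule IVT2'[of "\<lambda>s. D (ereal s) (ereal t)"])
    show "D (ereal t) (ereal t) \<le> \<delta>" using D_same[of "ereal t"] assms(3) by simp
    show "\<delta> \<le> D (ereal a) (ereal t)" using assms(4) by simp
    show "a \<le> t" using assms(1) by simp
    show "continuous_on {a..t} (\<lambda>s. D (ereal s) (ereal t))" by (rule D_cont_left)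
  qed
  then obtain s where s: "a \<le> s" "s \<le> t" "D (ereal s) (ereal t) = \<delta>" by blast
  show ?thesis
  proof (rule ex1I[of _ s])
    show "a \<le> s \<and> s \<le> t \<and> D (ereal s) (ereal t) = \<delta>" using s by simp
    fix y assume y: "a \<le> y \<and> y \<le> t \<and> D (ereal y) (ereal t) = \<delta>"
    show "y = s"
    proof (rule ccontr)
      assume "y \<noteq> s"
      then consider "y < s" | "s < y" by linarith
      then show False
      proof cases
        case 1
        have "D (ereal s) (ereal t) < D (ereal y) (ereal t)"
          by (rule D_strict_left) (use y s 1 assms in \<open>simp_all add: le_less_trans[of "ereal y" "ereal t"]\<close>)
        then show False using y s by simp
      next
        case 2
        have "D (ereal y) (ereal t) < D (ereal s) (ereal t)"
          by (rule D_strict_left) (use y s 2 assms in \<open>simp_all add: le_less_trans[of "ereal s" "ereal t"]\<close>)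
        then show False using y s by simp
      qed
    qed
  qed
qed

end

locale ham2 = ham +
  fixes c r :: real
  assumes cpos: "0 < c" and rpos: "0 < r" and dlt: "c / r^2 < D (ereal a) b"
begin

definition "\<delta> = c / r^2"

lemma dpos: "0 < \<delta>" using cpos rpos by (simp add: \<delta>_def)

abbreviation "\<sigma> \<equiv> sigma_seq a b k1 k2 k3 c r"

lemma sig_0: "\<sigma> 0 = ereal a" by simp

lemma sig_Suc: "\<sigma> (Suc j) = (if \<delta> < D (\<sigma> j) b
   then ereal (THE x. \<sigma> j < ereal x \<and> ereal x < b \<and> D (\<sigma> j) (ereal x) = \<delta>) else b)"
  by (simp add: Let_def \<delta>_def)

lemma sig_inv: "ereal a \<le> \<sigma> j \<and> \<sigma> j \<le> b"
proof (induction j)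
  case 0 then show ?case using ab by simp
next
  case (Suc j)
  show ?case
  proof (cases "\<delta> < D (\<sigma> j) b")
    case True
    have "\<sigma> j \<noteq> b" using True D_same[of b] dpos by auto
    then have lt: "\<sigma> j < b" using Suc by (simp add: less_le)
    obtain p where p: "\<sigma> j = ereal p" using Suc lt by (cases "\<sigma> j") auto
    have ap: "a \<le> p" using Suc p by simp
    have ex: "\<exists>!x. ereal p < ereal x \<and> ereal x < b \<and> D (ereal p) (ereal x) = \<delta>"
      by (rule exu_right[OF ap]) (use lt p True dpos in auto)
    let ?x = "THE x. \<sigma> j < ereal x \<and> ereal x < b \<and> D (\<sigma> j) (ereal x) = \<delta>"
    have x: "\<sigma> j < ereal ?x \<and> ereal ?x < b \<and> D (\<sigma> j) (ereal ?x) = \<delta>"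
      using theI'[OF ex] p by simp
    have sx: "\<sigma> (Suc j) = ereal ?x" using sig_Suc[of j] True by simp
    have "ereal a \<le> ereal ?x" using Suc x by (meson less_imp_le order.trans)
    moreover have "ereal ?x \<le> b" using x by (simp add: less_imp_le)
    ultimately show ?thesis using sx by simp
  next
    case False
    then show ?thesis using sig_Suc[of j] ab by (simp add: less_imp_le)
  qed
qed

lemma sig_real: "\<sigma> j \<noteq> b \<Longrightarrow> \<sigma> j = ereal (real_of_ereal (\<sigma> j))"
  using sig_inv[of j] ab by (cases "\<sigma> j") auto

lemma sig_step:
  assumes "\<delta> < D (\<sigma> j) b"
  shows "\<sigma> j < \<sigma> (Suc j) \<and> \<sigma> (Suc j) < b \<and> D (\<sigma> j) (\<sigma> (Suc j)) = \<delta>"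
proof -
  have "\<sigma> j \<noteq> b" using assms D_same[of b] dpos by auto
  then have lt: "\<sigma> j < b" using sig_inv[of j] by (simp add: less_le)
  obtain p where p: "\<sigma> j = ereal p" using sig_inv[of j] lt by (cases "\<sigma> j") auto
  have ap: "a \<le> p" using sig_inv[of j] p by simp
  have ex: "\<exists>!x. ereal p < ereal x \<and> ereal x < b \<and> D (ereal p) (ereal x) = \<delta>"
    by (rule exu_right[OF ap]) (use lt p assms dpos in auto)
  let ?x = "THE x. \<sigma> j < ereal x \<and> ereal x < b \<and> D (\<sigma> j) (ereal x) = \<delta>"
  have "\<sigma> j < ereal ?x \<and> ereal ?x < b \<and> D (\<sigma> j) (ereal ?x) = \<delta>"
    using theI'[OF ex] p by simp
  then show ?thesis using assms sig_Suc[of j] by simp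
qed

lemma sig_stop: "\<not> \<delta> < D (\<sigma> j) b \<Longrightarrow> \<sigma> (Suc j) = b"
  using sig_Suc[of j] by simp

abbreviation "T \<equiv> w1 (ereal a) b + w2 (ereal a) b"

lemma tr_ge: assumes "\<delta> \<le> D s t" shows "2 * sqrt \<delta> \<le> w1 s t + w2 s t"
proof -
  have "D s t = w1 s t * w2 s t - (w3 s t)^2" by (rule D_def')
  then have "4 * \<delta> \<le> 4 * (w1 s t * w2 s t)" using assms zero_le_power2[of "w3 s t"] by linarith
  also have "\<dots> \<le> (w1 s t + w2 s t)^2" using zero_le_power2[of "w1 s t - w2 s t"]
    by (simp add: algebra_simps power2_eq_square)
  finally have "sqrt (4 * \<delta>) \<le> sqrt ((w1 s t + w2 s t)^2)" by (rule real_sqrt_le_mono)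
  then show ?thesis using W_psd[of s t] by (simp add: real_sqrt_mult)
qed

lemma W_le_T: assumes "ereal a \<le> s" "s \<le> t" "t \<le> b" shows "w1 s t \<le> w1 (ereal a) b" "w2 s t \<le> w2 (ereal a) b"
proof -
  have "w1 s t \<le> w1 s b" by (rule omg_mono[OF int1 nn1 assms(2,3)])
  also have "\<dots> \<le> w1 (ereal a) b" using omg_add[OF int1 assms(1) order.trans[OF assms(2,3)]] W_psd[of "ereal a" s] by simp
  finally show "w1 s t \<le> w1 (ereal a) b" .
  have "w2 s t \<le> w2 s b" by (rule omg_mono[OF int2 nn2 assms(2,3)])
  also have "\<dots> \<le> w2 (ereal a) b" using omg_add[OF int2 assms(1) order.trans[OF assms(2,3)]] W_psd[of "ereal a" s] by simp
  finally show "w2 s t \<le> w2 (ereal a) b" .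
qed

lemma sig_mono_Suc: "\<sigma> j \<le> \<sigma> (Suc j)"
  using sig_step[of j] sig_stop[of j] sig_inv[of j] by (cases "\<delta> < D (\<sigma> j) b") auto

lemma sig_sum:
  assumes nb: "\<And>j. \<sigma> j \<noteq> b"
  shows "real n * (2 * sqrt \<delta>) \<le> w1 (ereal a) (\<sigma> n) + w2 (ereal a) (\<sigma> n)"
proof (induction n)
  case 0 then show ?case using W_psd by simp
next
  case (Suc n)
  have "\<delta> < D (\<sigma> n) b"
  proof (rule ccontr)
    assume "\<not> ?thesis"
    then have "\<sigma> (Suc n) = b" by (rule sig_stop)
    then show False using nb by blast
  qed
  from sig_step[OF this] have st: "\<sigma> n \<le> \<sigma> (Suc n)" "D (\<sigma> n) (\<sigma> (Suc n)) = \<delta>" by auto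
  have an: "ereal a \<le> \<sigma> n" using sig_inv[of n] by simp
  have "w1 (ereal a) (\<sigma> (Suc n)) = w1 (ereal a) (\<sigma> n) + w1 (\<sigma> n) (\<sigma> (Suc n))"
    by (rule omg_add[OF int1 an st(1)])
  moreover have "w2 (ereal a) (\<sigma> (Suc n)) = w2 (ereal a) (\<sigma> n) + w2 (\<sigma> n) (\<sigma> (Suc n))"
    by (rule omg_add[OF int2 an st(1)])
  moreover have "2 * sqrt \<delta> \<le> w1 (\<sigma> n) (\<sigma> (Suc n)) + w2 (\<sigma> n) (\<sigma> (Suc n))"
    by (rule tr_ge) (use st in simp)
  ultimately show ?case using Suc.IH by (simp add: algebra_simps)
qed

lemma sig_term: "\<exists>j. \<sigma> j = b"
proof (rule ccontr)
  assume "\<not> ?thesis"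
  then have nb: "\<And>j. \<sigma> j \<noteq> b" by blast
  have sd: "0 < 2 * sqrt \<delta>" using dpos by simp
  obtain n :: nat where n: "T / (2 * sqrt \<delta>) < real n" using reals_Archimedean2 by blast
  have "real n * (2 * sqrt \<delta>) \<le> T"
    using sig_sum[OF nb, of n] W_le_T[of "ereal a" "\<sigma> n"] sig_inv[of n] by simp
  then show False using n sd by (simp add: field_simps)
qed

end

context ham2 begin

definition "\<kappa> = kappaH a b k1 k2 k3 c r"

lemma sig_b_Suc: "\<sigma> j = b \<Longrightarrow> \<sigma> (Suc j) = b"
  using sig_stop[of j] D_same[of b] dpos by simp

lemma kap_props: "\<sigma> \<kappa> = b" "1 \<le> \<kappa>" "\<And>j. j < \<kappa> \<Longrightarrow> \<sigma> j \<noteq> b"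
proof -
  obtain j where "\<sigma> j = b" using sig_term by blast
  then have ex: "\<exists>j. j \<ge> 1 \<and> \<sigma> j = b" using sig_b_Suc[of j] by (intro exI[of _ "Suc j"]) simp
  have k: "\<kappa> = (LEAST j. j \<ge> 1 \<and> \<sigma> j = b)" by (simp add: \<kappa>_def kappaH_def)
  from LeastI_ex[OF ex] show "\<sigma> \<kappa> = b" "1 \<le> \<kappa>" unfolding k by auto
  fix i assume i: "i < \<kappa>"
  show "\<sigma> i \<noteq> b"
  proof
    assume si: "\<sigma> i = b"
    show False
    proof (cases "i = 0")
      case True then show False using si ab by simp
    next
      case False
      then have "\<kappa> \<le> i" unfolding k by (intro Least_le) (use si in simp)
      then show False using i by simp
    qed
  qed
qed

lemma kap_step: "Suc j < \<kappa> \<Longrightarrow> \<delta> < D (\<sigma> j) b"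
  using sig_stop[of j] kap_props(3)[of "Suc j"] by blast

lemma kap_step2: "Suc j < \<kappa> \<Longrightarrow> \<sigma> j < \<sigma> (Suc j) \<and> \<sigma> (Suc j) < b \<and> D (\<sigma> j) (\<sigma> (Suc j)) = \<delta>"
  using sig_step[OF kap_step] .

lemma kap_last: "\<not> \<delta> < D (\<sigma> (\<kappa> - 1)) b"
proof
  assume "\<delta> < D (\<sigma> (\<kappa> - 1)) b"
  from sig_step[OF this] have "\<sigma> (Suc (\<kappa> - 1)) < b" by simp
  then show False using kap_props(1,2) by simp
qed

lemma kap_ge2: "2 \<le> \<kappa>"
proof -
  have d0: "\<delta> < D (\<sigma> 0) b" using dlt by (simp add: \<delta>_def)
  have lt: "\<sigma> (Suc 0) < b" using sig_step[OF d0] by blast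
  have ne: "\<sigma> (Suc 0) \<noteq> b" using less_imp_neq[OF lt] .
  show ?thesis
  proof (rule ccontr)
    assume "\<not> 2 \<le> \<kappa>"
    then have "\<kappa> = Suc 0" using kap_props(2) by simp
    then show False using kap_props(1) ne by metis
  qed
qed

lemma sig_lt_Suc: "j < \<kappa> \<Longrightarrow> \<sigma> j < \<sigma> (Suc j)"
proof -
  assume j: "j < \<kappa>"
  show ?thesis
  proof (cases "Suc j < \<kappa>")
    case True then show ?thesis using kap_step2 by blast
  next
    case False
    then have "Suc j = \<kappa>" using j by simp
    then show ?thesis using kap_props(1) kap_props(3)[OF j] sig_inv[of j] by (simp add: less_le)
  qed
qed

lemma sig_less: "i < j \<Longrightarrow> j \<le> \<kappa> \<Longrightarrow> \<sigma> i < \<sigma> j"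
proof (induction j)
  case 0 then show ?case by simp
next
  case (Suc j)
  show ?case
  proof (cases "i = j")
    case True then show ?thesis using sig_lt_Suc Suc.prems by simp
  next
    case False
    then have "\<sigma> i < \<sigma> j" using Suc by simp
    also have "\<dots> < \<sigma> (Suc j)" using sig_lt_Suc Suc.prems by simp
    finally show ?thesis .
  qed
qed

lemma sig_le: "i \<le> j \<Longrightarrow> j \<le> \<kappa> \<Longrightarrow> \<sigma> i \<le> \<sigma> j"
  using sig_less[of i j] by (cases "i = j") auto

definition "p j = real_of_ereal (\<sigma> j)"

lemma p_eq: "j < \<kappa> \<Longrightarrow> \<sigma> j = ereal (p j)"
  unfolding p_def using sig_real kap_props(3) by blast

lemma p_ge_a: "j < \<kappa> \<Longrightarrow> a \<le> p j"
  using sig_inv[of j] p_eq[of j] by simp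

lemma p_lt_b: "j < \<kappa> \<Longrightarrow> ereal (p j) < b"
  using sig_less[of j \<kappa>] p_eq[of j] kap_props(1) by simp

lemma D_step: "Suc j < \<kappa> \<Longrightarrow> D (ereal (p j)) (ereal (p (Suc j))) = \<delta>"
  using kap_step2[of j] p_eq[of j] p_eq[of "Suc j"] by simp

definition "tt = that_fn a b k1 k2 k3 c r"

lemma tt_props: "\<sigma> 1 = ereal tt" "a < tt" "ereal tt < b" "D (ereal a) (ereal tt) = \<delta>"
proof -
  have "\<delta> < D (\<sigma> 0) b" using dlt by (simp add: \<delta>_def)
  then have s1: "\<sigma> 1 = ereal (THE x. ereal a < ereal x \<and> ereal x < b \<and> D (ereal a) (ereal x) = \<delta>)"
    using sig_Suc[of 0] by simp
  have "(\<lambda>x. ereal a < ereal x \<and> ereal x < b \<and> D (ereal a) (ereal x) = \<delta>)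
      = (\<lambda>t. a < t \<and> ereal t < b \<and> D (ereal a) (ereal t) = c / r\<^sup>2)"
    by (simp add: \<delta>_def)
  then show s1': "\<sigma> 1 = ereal tt" using s1 by (simp add: tt_def that_fn_def)
  have "\<delta> < D (\<sigma> 0) b" using dlt by (simp add: \<delta>_def)
  from sig_step[OF this] s1' show "a < tt" "ereal tt < b" "D (ereal a) (ereal tt) = \<delta>" by auto
qed

definition "sh u = shat_fn a k1 k2 k3 c u r"

lemma sh_props:
  assumes "tt \<le> u" "ereal u < b"
  shows "a \<le> sh u" "sh u \<le> u" "D (ereal (sh u)) (ereal u) = \<delta>"
proof -
  have "\<delta> \<le> D (ereal a) (ereal u)" using tt_props D_mono_right[of "ereal a" "ereal tt" "ereal u"] assms by simp
  then have ex: "\<exists>!s. a \<le> s \<and> s \<le> u \<and> D (ereal s) (ereal u) = \<delta>"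
    by (rule exu_left[rotated 3]) (use tt_props assms dpos in auto)
  have "sh u = (THE s. a \<le> s \<and> s \<le> u \<and> D (ereal s) (ereal u) = \<delta>)"
    by (simp add: sh_def shat_fn_def \<delta>_def)
  with theI'[OF ex] show "a \<le> sh u" "sh u \<le> u" "D (ereal (sh u)) (ereal u) = \<delta>" by auto
qed

end

context ham2 begin

abbreviation "K u \<equiv> kernelH a b k1 k2 k3 c u r"

lemma K_lt: "u < tt \<Longrightarrow> K u = w2 (ereal a) (ereal u) * k1 u / (\<delta> + (w3 (ereal a) (ereal u))^2)"
  by (simp add: kernelH_def tt_def \<delta>_def)

lemma K_ge: "\<not> u < tt \<Longrightarrow> K u = k1 u / w1 (ereal (sh u)) (ereal u)"
  by (simp add: kernelH_def tt_def sh_def)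

lemma T_pos: "2 * sqrt \<delta> \<le> T" "0 < T"
proof -
  show "2 * sqrt \<delta> \<le> T" using tr_ge[of "ereal a" b] dlt by (simp add: \<delta>_def)
  then show "0 < T" using dpos by (smt (verit) real_sqrt_gt_zero)
qed

definition "m = \<delta> / T"

lemma m_pos: "0 < m" using dpos T_pos by (simp add: m_def)

lemma K_upper:
  assumes j: "j < \<kappa>" and u: "u \<in> einterval (\<sigma> j) (\<sigma> (Suc j))" and k: "0 \<le> k1 u"
  shows "K u \<le> k1 u / max m (w1 (ereal (p j)) (ereal u))"
proof -
  have uj: "p j < u" "ereal u < \<sigma> (Suc j)" using u p_eq[OF j] by (auto simp: einterval_def)
  have "\<sigma> (Suc j) \<le> b" using sig_le[of "Suc j" \<kappa>] j kap_props(1) by simp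
  with uj(2) have ub: "ereal u < b" by (rule order.strict_trans2)
  have au: "a \<le> u" using p_ge_a[OF j] uj by simp
  show ?thesis
  proof (cases "j = 0")
    case True
    then have pj: "p j = a" using p_eq[OF j] by simp
    have "\<sigma> (Suc j) = ereal tt" using True tt_props(1) by simp
    then have utt: "u < tt" using uj by simp
    let ?A = "w1 (ereal a) (ereal u)" and ?B = "w2 (ereal a) (ereal u)" and ?C = "w3 (ereal a) (ereal u)"
    have "D (ereal a) (ereal u) \<le> D (ereal a) (ereal tt)" by (rule D_mono_right) (use au utt in auto)
    then have AB: "?A * ?B \<le> \<delta> + ?C^2" using tt_props(4) D_def'[of "ereal a" "ereal u"] by simp
    have BT: "?B \<le> T" using W_le_T[of "ereal a" "ereal u"] ub au W_psd[of "ereal a" "ereal u"] W_psd[of "ereal a" b]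
      by (simp add: less_imp_le)
    have B0: "0 \<le> ?B" "0 \<le> ?A" using W_psd by auto
    have key: "?B * max m ?A \<le> \<delta> + ?C^2"
    proof (cases "?A \<le> m")
      case True
      then have "?B * max m ?A = ?B * \<delta> / T" by (simp add: m_def)
      also have "\<dots> \<le> T * \<delta> / T" using BT dpos T_pos by (intro divide_right_mono mult_right_mono) auto
      also have "\<dots> = \<delta>" using T_pos by simp
      finally show ?thesis using zero_le_power2[of "w3 (ereal a) (ereal u)"] by linarith
    next
      case False then show ?thesis using AB by (simp add: mult.commute)
    qed
    have pos1: "0 < \<delta> + ?C^2" using dpos by (simp add: add_pos_nonneg)
    have pos2: "0 < max m ?A" using m_pos by simp
    have "K u = ?B * k1 u / (\<delta> + ?C^2)" using K_lt[OF utt] by simp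
    also have "\<dots> \<le> k1 u / max m ?A"
      using key k pos1 pos2 by (simp add: divide_simps) (metis mult.assoc mult.commute mult_left_mono)
    finally show ?thesis using pj by simp
  next
    case False
    then have "\<sigma> 1 \<le> \<sigma> j" using sig_le[of 1 j] j by simp
    then have "tt \<le> u" using tt_props(1) p_eq[OF j] uj by simp
    then have nut: "\<not> u < tt" by simp
    note sh = sh_props[OF \<open>tt \<le> u\<close> ub]
    let ?s = "sh u"
    have Dle: "D (ereal (p j)) (ereal u) \<le> \<delta>"
    proof (cases "Suc j < \<kappa>")
      case True
      have "D (ereal (p j)) (ereal u) \<le> D (ereal (p j)) (ereal (p (Suc j)))"
        by (rule D_mono_right) (use uj p_eq[OF True] in auto)
      then show ?thesis using D_step[OF True] by simp
    next
      case False
      then have "Suc j = \<kappa>" using j by simp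
      then have "\<kappa> - 1 = j" by simp
      then have "\<not> \<delta> < D (ereal (p j)) b" using kap_last p_eq[OF j] by metis
      moreover have "D (ereal (p j)) (ereal u) \<le> D (ereal (p j)) b"
        by (rule D_mono_right) (use uj ub in auto)
      ultimately show ?thesis by simp
    qed
    have spj: "?s \<le> p j"
    proof (rule ccontr)
      assume "\<not> ?thesis"
      then have "D (ereal ?s) (ereal u) < D (ereal (p j)) (ereal u)"
        by (intro D_strict_left) (use p_ge_a[OF j] p_lt_b[OF j] sh dpos in auto)
      then show False using Dle sh by simp
    qed
    have w1ge: "w1 (ereal (p j)) (ereal u) \<le> w1 (ereal ?s) (ereal u)"
      using omg_add[OF int1, of "ereal ?s" "ereal (p j)" "ereal u"] spj uj W_psd[of "ereal ?s" "ereal (p j)"] by simp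
    have w2T: "w2 (ereal ?s) (ereal u) \<le> T"
      using W_le_T[of "ereal ?s" "ereal u"] sh ub W_psd[of "ereal a" b] by (simp add: less_imp_le)
    have "\<delta> \<le> w1 (ereal ?s) (ereal u) * w2 (ereal ?s) (ereal u)"
      using sh(3) D_def'[of "ereal ?s" "ereal u"] zero_le_power2[of "w3 (ereal ?s) (ereal u)"] by linarith
    also have "\<dots> \<le> w1 (ereal ?s) (ereal u) * T" using w2T W_psd by (simp add: mult_left_mono)
    finally have "m \<le> w1 (ereal ?s) (ereal u)" using T_pos by (simp add: m_def divide_simps)
    then have mx: "max m (w1 (ereal (p j)) (ereal u)) \<le> w1 (ereal ?s) (ereal u)" using w1ge by simp
    have "K u = k1 u / w1 (ereal ?s) (ereal u)" using K_ge[OF nut] by simp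
    also have "\<dots> \<le> k1 u / max m (w1 (ereal (p j)) (ereal u))"
      by (rule divide_left_mono[OF mx k]) (use m_pos mx in \<open>auto intro!: mult_pos_pos\<close>)
    finally show ?thesis .
  qed
qed

lemma K_lower:
  assumes j: "1 \<le> j" "Suc j < \<kappa>" and u: "u \<in> einterval (\<sigma> j) (\<sigma> (Suc j))" and k: "0 \<le> k1 u"
  shows "k1 u / w1 (ereal (p (j - 1))) (ereal u) \<le> K u"
proof -
  have jk: "j < \<kappa>" "j - 1 < \<kappa>" "Suc (j - 1) < \<kappa>" using j by auto
  have uj: "p j < u" "u < p (Suc j)" using u p_eq[OF jk(1)] p_eq[OF j(2)] by (auto simp: einterval_def)
  have "ereal u < ereal (p (Suc j))" using uj(2) by simp
  from this p_lt_b[OF j(2)] have ub: "ereal u < b" by (rule order.strict_trans)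
  have "\<sigma> 1 \<le> \<sigma> j" using sig_le[of 1 j] j by simp
  then have "tt \<le> u" using tt_props(1) p_eq[OF jk(1)] uj by simp
  then have nut: "\<not> u < tt" by simp
  note sh = sh_props[OF \<open>tt \<le> u\<close> ub]
  let ?s = "sh u" and ?q = "p (j - 1)"
  have shb: "ereal ?s < b" using sh(2) ub by (meson ereal_less_eq(3) order.strict_trans1)
  have Dq: "\<delta> \<le> D (ereal ?q) (ereal u)"
  proof -
    have "D (ereal ?q) (ereal (p j)) = \<delta>" using D_step[OF jk(3)] j by simp
    moreover have "D (ereal ?q) (ereal (p j)) \<le> D (ereal ?q) (ereal u)"
      by (rule D_mono_right) (use sig_le[of "j - 1" j] p_eq jk uj in auto)
    ultimately show ?thesis by simp
  qed
  have qj: "?q \<le> p j" using sig_le[of "j - 1" j] p_eq jk by auto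
  have sq: "?q \<le> ?s"
  proof (rule ccontr)
    assume "\<not> ?thesis"
    then have "D (ereal ?q) (ereal u) < D (ereal ?s) (ereal u)"
      by (intro D_strict_left) (use Dq dpos sh qj uj shb in auto)
    then show False using Dq sh by simp
  qed
  have w1le: "w1 (ereal ?s) (ereal u) \<le> w1 (ereal ?q) (ereal u)"
    using omg_add[OF int1, of "ereal ?q" "ereal ?s" "ereal u"] sq sh W_psd[of "ereal ?q" "ereal ?s"] by simp
  have w1pos: "0 < w1 (ereal ?s) (ereal u)"
  proof (rule ccontr)
    assume "\<not> ?thesis"
    then have "w1 (ereal ?s) (ereal u) = 0" using W_psd[of "ereal ?s" "ereal u"] by simp
    then have "D (ereal ?s) (ereal u) \<le> 0" using D_def'[of "ereal ?s" "ereal u"] by simp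
    then show False using sh dpos by simp
  qed
  have "k1 u / w1 (ereal ?q) (ereal u) \<le> k1 u / w1 (ereal ?s) (ereal u)"
    by (rule divide_left_mono[OF w1le k]) (use w1pos w1le in simp)
  also have "\<dots> = K u" using K_ge[OF nut] by simp
  finally show ?thesis .
qed

end

lemma omg_mono_fun:
  assumes f: "integrable lborel f" and nn: "AE x in lborel. 0 \<le> f x"
  shows "mono (\<lambda>u. omg f (ereal s0) (ereal u))"
proof (rule monoI)
  fix x y :: real assume "x \<le> y"
  show "omg f (ereal s0) (ereal x) \<le> omg f (ereal s0) (ereal y)"
  proof (cases "s0 \<le> x")
    case True then show ?thesis using omg_mono[OF f nn, of s0 x y] \<open>x \<le> y\<close> by simp
  next
    case False then show ?thesis using omg_empty[of "ereal x" "ereal s0" f] omg_nonneg[OF nn] by simp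
  qed
qed

lemma log_int:
  assumes "0 < p" "p \<le> q"
  shows "(\<integral>\<^sup>+v. ennreal (1 / v) * indicator {p<..<q} v \<partial>lborel) = ennreal (ln q - ln p)"
proof -
  have "(\<integral>\<^sup>+v. ennreal (1 / v) * indicator {p<..<q} v \<partial>lborel) = (\<integral>\<^sup>+v. ennreal (1 / v) * indicator {p..q} v \<partial>lborel)"
  proof (rule nn_integral_cong_AE)
    have "AE v in lborel. v \<notin> {p, q}"
      using AE_not_in[OF finite_imp_null_set_lborel[of "{p, q}"]] by simp
    then show "AE v in lborel. ennreal (1 / v) * indicator {p<..<q} v = ennreal (1 / v) * indicator {p..q} v"
      by eventually_elim (auto split: split_indicator)
  qed
  also have "\<dots> = ennreal (ln q - ln p)"
  proof (rule nn_integral_FTC_Icc)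
    show "(\<lambda>v::real. 1 / v) \<in> borel_measurable borel"
      using borel_measurable_inverse[OF measurable_ident_sets[OF refl, of borel]] by (simp add: divide_inverse)
    show "DERIV ln x :> 1 / x" if "x \<in> {p..q}" for x
      using that assms by (auto intro!: derivative_eq_intros)
    show "0 \<le> 1 / x" if "x \<in> {p..q}" for x using that assms by simp
  qed (use assms in simp)
  finally show ?thesis .
qed

lemma upper_int:
  assumes m: "0 < m" "m \<le> U" and L: "L \<le> U"
  shows "(\<integral>\<^sup>+v. ennreal (1 / max m v) * indicator {0<..<L} v \<partial>lborel) \<le> ennreal (1 + ln (U / m))"
proof -
  have meas: "(\<lambda>v. ennreal (1 / max m v)) \<in> borel_measurable borel" by measurable
  have "(\<integral>\<^sup>+v. ennreal (1 / max m v) * indicator {0<..<L} v \<partial>lborel)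
      \<le> (\<integral>\<^sup>+v. ennreal (1 / m) * indicator {0..m} v + ennreal (1 / v) * indicator {m..U} v \<partial>lborel)"
  proof (rule nn_integral_mono)
    fix v
    show "ennreal (1 / max m v) * indicator {0<..<L} v \<le> ennreal (1 / m) * indicator {0..m} v + ennreal (1 / v) * indicator {m..U} v"
    proof (cases "v \<in> {0<..<L}")
      case True
      show ?thesis
      proof (cases "v \<le> m")
        case True
        then show ?thesis using \<open>v \<in> {0<..<L}\<close> by (simp add: max_def)
      next
        case False
        then have "v \<in> {m..U}" using \<open>v \<in> {0<..<L}\<close> L by auto
        then show ?thesis using False \<open>v \<in> {0<..<L}\<close> by (simp add: max_def)
      qed
    qed simp
  qed
  also have "\<dots> = (\<integral>\<^sup>+v. ennreal (1 / m) * indicator {0..m} v \<partial>lborel) + (\<integral>\<^sup>+v. ennreal (1 / v) * indicator {m..U} v \<partial>lborel)"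
    by (rule nn_integral_add) auto
  also have "(\<integral>\<^sup>+v. ennreal (1 / m) * indicator {0..m} v \<partial>lborel) = ennreal (1 / m) * ennreal m"
    using m by (simp add: nn_integral_cmult_indicator)
  also have "\<dots> = 1" using m by (simp flip: ennreal_mult)
  also have "(\<integral>\<^sup>+v. ennreal (1 / v) * indicator {m..U} v \<partial>lborel) = ennreal (ln U - ln m)"
  proof (rule nn_integral_FTC_Icc)
    show "(\<lambda>v::real. 1 / v) \<in> borel_measurable borel"
      using borel_measurable_inverse[OF measurable_ident_sets[OF refl, of borel]] by (simp add: divide_inverse)
    show "DERIV ln x :> 1 / x" if "x \<in> {m..U}" for x
      using that m by (auto intro!: derivative_eq_intros)
    show "0 \<le> 1 / x" if "x \<in> {m..U}" for x using that m by simp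
  qed (use m in simp)
  also have "1 + ennreal (ln U - ln m) = ennreal (1 + ln (U / m))"
  proof -
    have "ln m \<le> ln U" using m by simp
    then have "ennreal (1 + (ln U - ln m)) = ennreal 1 + ennreal (ln U - ln m)"
      by (intro ennreal_plus) auto
    then show ?thesis using m by (simp add: ln_div)
  qed
  finally show ?thesis .
qed

lemma tele:
  fixes x :: "nat \<Rightarrow> real"
  assumes "\<And>i. i \<le> n \<Longrightarrow> 0 < x i"
  shows "real n * ln 2 + (ln (x n) - ln (x 0)) / 2 \<le> (\<Sum>i<n. ln (x i + x (Suc i)) - ln (x i))"
  using assms
proof (induction n)
  case 0 then show ?case by simp
next
  case (Suc n)
  have A: "0 < x n" and B: "0 < x (Suc n)" using Suc.prems by auto
  have "4 * (x n * x (Suc n)) \<le> (x n + x (Suc n))^2"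
    using zero_le_power2[of "x n - x (Suc n)"] by (simp add: algebra_simps power2_eq_square)
  then have "ln (4 * (x n * x (Suc n))) \<le> ln ((x n + x (Suc n))^2)"
    using A B by (subst ln_le_cancel_iff) auto
  then have "ln 4 + ln (x n) + ln (x (Suc n)) \<le> 2 * ln (x n + x (Suc n))"
    using A B by (simp add: ln_mult ln_realpow)
  moreover have "ln (4::real) = 2 * ln 2"
    using ln_realpow[of 2 2] by simp
  ultimately have step: "ln 2 + (ln (x (Suc n)) - ln (x n)) / 2 \<le> ln (x n + x (Suc n)) - ln (x n)"
    by (simp add: field_simps)
  have "real (Suc n) * ln 2 + (ln (x (Suc n)) - ln (x 0)) / 2
     = (real n * ln 2 + (ln (x n) - ln (x 0)) / 2) + (ln 2 + (ln (x (Suc n)) - ln (x n)) / 2)"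
    by (simp add: field_simps)
  also have "\<dots> \<le> (\<Sum>i<n. ln (x i + x (Suc i)) - ln (x i)) + (ln (x n + x (Suc n)) - ln (x n))"
    using Suc.IH Suc.prems step by (intro add_mono) auto
  finally show ?case by simp
qed


context ham2 begin

lemma locate:
  assumes u: "u \<in> einterval a b" and np: "\<And>j. j < \<kappa> \<Longrightarrow> u \<noteq> p j"
  shows "\<exists>j<\<kappa>. u \<in> einterval (\<sigma> j) (\<sigma> (Suc j))"
proof -
  define S where "S = {j. j < \<kappa> \<and> \<sigma> j < ereal u}"
  have fin: "finite S" unfolding S_def by simp
  have "0 \<in> S" using u kap_props(2) by (simp add: S_def einterval_def)
  then have ne: "S \<noteq> {}" by blast
  define j where "j = Max S"
  have jS: "j \<in> S" unfolding j_def using Max_in[OF fin ne] .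
  then have j: "j < \<kappa>" "\<sigma> j < ereal u" by (auto simp: S_def)
  have "ereal u < \<sigma> (Suc j)"
  proof (cases "Suc j < \<kappa>")
    case True
    have "Suc j \<notin> S" using Max_ge[OF fin, of "Suc j"] unfolding j_def[symmetric] by auto
    then have "\<not> \<sigma> (Suc j) < ereal u" using True by (simp add: S_def)
    moreover have "\<sigma> (Suc j) \<noteq> ereal u" using p_eq[OF True] np[OF True] by simp
    ultimately show ?thesis by simp
  next
    case False
    then have "Suc j = \<kappa>" using j by simp
    then show ?thesis using kap_props(1) u by (simp add: einterval_def)
  qed
  then show ?thesis using j by (auto simp: einterval_def)
qed

lemma m_le_T: "m \<le> T"
proof -
  have "sqrt \<delta> \<le> T / 2" using T_pos by simp
  have "\<delta> = sqrt \<delta> * sqrt \<delta>" using dpos by simp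
  also have "\<dots> \<le> (T / 2) * (T / 2)" using \<open>sqrt \<delta> \<le> T / 2\<close> dpos T_pos(2) by (intro mult_mono) auto
  also have "\<dots> \<le> T * T" by (intro mult_mono) (use T_pos(2) in auto)
  finally show ?thesis using T_pos by (simp add: m_def field_simps)
qed

lemma upper_total:
  "(\<integral>\<^sup>+u. ennreal (K u) * indicator (einterval a b) u \<partial>lborel) \<le> of_nat \<kappa> * ennreal (1 + ln (T / m))"
proof -
  define g where "g v = ennreal (1 / max m v)" for v
  define G where "G j u = ennreal (k1 u) * g (w1 (ereal (p j)) (ereal u)) * indicator (einterval (\<sigma> j) (\<sigma> (Suc j))) u" for j u
  have gm: "g \<in> borel_measurable borel" unfolding g_def by measurable
  have k1m: "k1 \<in> borel_measurable lborel" using int1 by (rule borel_measurable_integrable)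
  have Gm: "G j \<in> borel_measurable lborel" for j
  proof -
    have wm: "(\<lambda>u. w1 (ereal (p j)) (ereal u)) \<in> borel_measurable borel"
      by (rule borel_measurable_mono[OF omg_mono_fun[OF int1 nn1]])
    have "(\<lambda>u. g (w1 (ereal (p j)) (ereal u))) \<in> borel_measurable borel"
      using measurable_compose[OF wm gm] by (simp add: comp_def)
    then show ?thesis unfolding G_def using k1m by measurable
  qed
  have AEnp: "AE u in lborel. u \<notin> p ` {..<\<kappa>}"
    by (rule AE_not_in) (rule finite_imp_null_set_lborel, simp)
  have step1: "(\<integral>\<^sup>+u. ennreal (K u) * indicator (einterval a b) u \<partial>lborel) \<le> (\<integral>\<^sup>+u. (\<Sum>j<\<kappa>. G j u) \<partial>lborel)"
  proof (rule nn_integral_mono_AE)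
    show "AE u in lborel. ennreal (K u) * indicator (einterval a b) u \<le> (\<Sum>j<\<kappa>. G j u)"
      using AEnp nn1
    proof eventually_elim
      case (elim u)
      show ?case
      proof (cases "u \<in> einterval a b")
        case False then show ?thesis by simp
      next
        case True
        have "\<And>j. j < \<kappa> \<Longrightarrow> u \<noteq> p j" using elim(1) by auto
        from locate[OF True this] obtain j where j: "j < \<kappa>" "u \<in> einterval (\<sigma> j) (\<sigma> (Suc j))" by blast
        have mp: "0 < max m (w1 (ereal (p j)) (ereal u))" using m_pos by simp
        have "ennreal (K u) \<le> ennreal (k1 u / max m (w1 (ereal (p j)) (ereal u)))"
          by (rule ennreal_leI[OF K_upper[OF j elim(2)]])
        also have "\<dots> = G j u" using j(2) elim(2) mp
          by (simp add: G_def g_def ennreal_mult[symmetric] divide_inverse)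
        also have "\<dots> \<le> (\<Sum>j<\<kappa>. G j u)" by (rule member_le_sum) (use j in auto)
        finally show ?thesis using True by simp
      qed
    qed
  qed
  also have "\<dots> = (\<Sum>j<\<kappa>. (\<integral>\<^sup>+u. G j u \<partial>lborel))"
    by (rule nn_integral_sum) (use Gm in auto)
  also have "\<dots> \<le> (\<Sum>j<\<kappa>. ennreal (1 + ln (T / m)))"
  proof (rule sum_mono)
    fix j assume "j \<in> {..<\<kappa>}"
    then have j: "j < \<kappa>" by simp
    have lt: "ereal (p j) < \<sigma> (Suc j)" using sig_lt_Suc[OF j] p_eq[OF j] by simp
    have "(\<integral>\<^sup>+u. G j u \<partial>lborel) = (\<integral>\<^sup>+u. ennreal (k1 u) * g (w1 (ereal (p j)) (ereal u)) * indicator (einterval (ereal (p j)) (\<sigma> (Suc j))) u \<partial>lborel)"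
      unfolding G_def using p_eq[OF j] by simp
    also have "\<dots> = (\<integral>\<^sup>+v. g v * indicator {w1 (ereal (p j)) (ereal (p j)) <..< w1 (ereal (p j)) (\<sigma> (Suc j))} v \<partial>lborel)"
      by (rule cov[OF int1 nn1 order.refl lt gm])
    also have "\<dots> \<le> ennreal (1 + ln (T / m))"
      unfolding g_def W_same
    proof (rule upper_int[OF m_pos m_le_T])
      have "w1 (ereal (p j)) (\<sigma> (Suc j)) \<le> w1 (ereal a) b"
        by (rule W_le_T) (use p_ge_a[OF j] lt sig_inv[of "Suc j"] in auto)
      then show "w1 (ereal (p j)) (\<sigma> (Suc j)) \<le> T" using W_psd[of "ereal a" b] by simp
    qed
    finally show "(\<integral>\<^sup>+u. G j u \<partial>lborel) \<le> ennreal (1 + ln (T / m))" .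
  qed
  also have "\<dots> = of_nat \<kappa> * ennreal (1 + ln (T / m))" by simp
  finally show ?thesis .
qed

end

context ham2 begin

definition "xx i = w1 (ereal (p i)) (ereal (p (Suc i)))"

lemma xx_pos: "Suc i < \<kappa> \<Longrightarrow> 0 < xx i"
proof (rule ccontr)
  assume i: "Suc i < \<kappa>" and "\<not> 0 < xx i"
  then have "xx i = 0" using W_psd[of "ereal (p i)" "ereal (p (Suc i))"] by (simp add: xx_def)
  then have "D (ereal (p i)) (ereal (p (Suc i))) \<le> 0"
    using D_def'[of "ereal (p i)" "ereal (p (Suc i))"] by (simp add: xx_def)
  then show False using D_step[OF i] dpos by simp
qed

lemma lower_total:
  "ennreal (\<Sum>i<\<kappa> - 2. ln (xx i + xx (Suc i)) - ln (xx i)) \<le> (\<integral>\<^sup>+u. ennreal (K u) * indicator (einterval a b) u \<partial>lborel)"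
proof -
  define g where "g v = ennreal (1 / v)" for v :: real
  define J where "J i = einterval (\<sigma> (Suc i)) (\<sigma> (Suc (Suc i)))" for i
  define L where "L i u = ennreal (k1 u) * g (w1 (ereal (p i)) (ereal u)) * indicator (J i) u" for i u
  have gm: "g \<in> borel_measurable borel" unfolding g_def
    using measurable_compose[OF borel_measurable_inverse[OF measurable_ident_sets[OF refl, of borel]] measurable_ennreal]
    by (simp add: comp_def divide_inverse)
  have k1m: "k1 \<in> borel_measurable lborel" using int1 by (rule borel_measurable_integrable)
  have Lm: "L i \<in> borel_measurable lborel" for i
  proof -
    have wm: "(\<lambda>u. w1 (ereal (p i)) (ereal u)) \<in> borel_measurable borel"
      by (rule borel_measurable_mono[OF omg_mono_fun[OF int1 nn1]])
    have "(\<lambda>u. g (w1 (ereal (p i)) (ereal u))) \<in> borel_measurable borel"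
      using measurable_compose[OF wm gm] by (simp add: comp_def)
    then show ?thesis unfolding L_def J_def using k1m by measurable
  qed
  have Lint: "(\<integral>\<^sup>+u. L i u \<partial>lborel) = ennreal (ln (xx i + xx (Suc i)) - ln (xx i))" if i: "i < \<kappa> - 2" for i
  proof -
    have i2: "Suc (Suc i) < \<kappa>" "Suc i < \<kappa>" "i < \<kappa>" using i by auto
    have lt: "ereal (p (Suc i)) < ereal (p (Suc (Suc i)))" using sig_lt_Suc[OF i2(2)] p_eq[OF i2(2)] p_eq[OF i2(1)] by simp
    have pi: "p i \<le> p (Suc i)" using sig_lt_Suc[OF i2(3)] p_eq[OF i2(3)] p_eq[OF i2(2)] by simp
    have add: "w1 (ereal (p i)) (ereal (p (Suc (Suc i)))) = xx i + xx (Suc i)"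
      unfolding xx_def by (rule omg_add[OF int1]) (use pi lt in auto)
    have "(\<integral>\<^sup>+u. L i u \<partial>lborel) = (\<integral>\<^sup>+u. ennreal (k1 u) * g (w1 (ereal (p i)) (ereal u)) * indicator (einterval (ereal (p (Suc i))) (ereal (p (Suc (Suc i))))) u \<partial>lborel)"
      unfolding L_def J_def using p_eq[OF i2(1)] p_eq[OF i2(2)] by simp
    also have "\<dots> = (\<integral>\<^sup>+v. g v * indicator {w1 (ereal (p i)) (ereal (p (Suc i))) <..< w1 (ereal (p i)) (ereal (p (Suc (Suc i))))} v \<partial>lborel)"
      by (rule cov[OF int1 nn1 pi lt gm])
    also have "\<dots> = ennreal (ln (xx i + xx (Suc i)) - ln (xx i))"
      unfolding g_def add xx_def[symmetric]
      by (rule log_int) (use xx_pos[OF i2(2)] xx_pos[OF i2(1)] in auto)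
    finally show ?thesis .
  qed
  have disj: "u \<notin> J i'" if hh: "u \<in> J i" "i' \<noteq> i" "i < \<kappa> - 2" "i' < \<kappa> - 2" for u i i'
  proof
    assume u': "u \<in> J i'"
    consider "i' < i" | "i < i'" using hh(2) by linarith
    then show False
    proof cases
      case 1
      have le: "\<sigma> (Suc (Suc i')) \<le> \<sigma> (Suc i)" by (rule sig_le) (use 1 hh in auto)
      have u1: "ereal u < \<sigma> (Suc (Suc i'))" using u' by (simp add: J_def einterval_def)
      have u2: "\<sigma> (Suc i) < ereal u" using hh(1) by (simp add: J_def einterval_def)
      from u1 le have "ereal u < \<sigma> (Suc i)" by (rule order.strict_trans2)
      then show False using u2 by simp
    next
      case 2
      have le: "\<sigma> (Suc (Suc i)) \<le> \<sigma> (Suc i')" by (rule sig_le) (use 2 hh in auto)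
      have u1: "ereal u < \<sigma> (Suc (Suc i))" using hh(1) by (simp add: J_def einterval_def)
      have u2: "\<sigma> (Suc i') < ereal u" using u' by (simp add: J_def einterval_def)
      from u1 le have "ereal u < \<sigma> (Suc i')" by (rule order.strict_trans2)
      then show False using u2 by simp
    qed
  qed
  have "ennreal (\<Sum>i<\<kappa> - 2. ln (xx i + xx (Suc i)) - ln (xx i)) = (\<Sum>i<\<kappa> - 2. ennreal (ln (xx i + xx (Suc i)) - ln (xx i)))"
  proof (rule sum_ennreal[symmetric])
    fix i assume "i \<in> {..<\<kappa> - 2}"
    then have "Suc (Suc i) < \<kappa>" "Suc i < \<kappa>" by auto
    then have "0 < xx i" "0 < xx (Suc i)" using xx_pos by auto
    then show "0 \<le> ln (xx i + xx (Suc i)) - ln (xx i)" by simp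
  qed
  also have "\<dots> = (\<Sum>i<\<kappa> - 2. (\<integral>\<^sup>+u. L i u \<partial>lborel))" using Lint by simp
  also have "\<dots> = (\<integral>\<^sup>+u. (\<Sum>i<\<kappa> - 2. L i u) \<partial>lborel)"
    by (rule nn_integral_sum[symmetric]) (use Lm in auto)
  also have "\<dots> \<le> (\<integral>\<^sup>+u. ennreal (K u) * indicator (einterval a b) u \<partial>lborel)"
  proof (rule nn_integral_mono_AE)
    show "AE u in lborel. (\<Sum>i<\<kappa> - 2. L i u) \<le> ennreal (K u) * indicator (einterval a b) u"
      using nn1
    proof eventually_elim
      case (elim u)
      show ?case
      proof (cases "\<exists>i<\<kappa> - 2. u \<in> J i")
        case False
        then have "\<forall>i\<in>{..<\<kappa> - 2}. L i u = 0" by (auto simp: L_def)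
        then show ?thesis by simp
      next
        case True
        then obtain i where i: "i < \<kappa> - 2" "u \<in> J i" by blast
        have i2: "Suc (Suc i) < \<kappa>" "Suc i < \<kappa>" "1 \<le> Suc i" using i by auto
        have uin: "u \<in> einterval a b"
        proof -
          have "ereal a \<le> \<sigma> (Suc i)" using sig_inv by blast
          moreover have "\<sigma> (Suc (Suc i)) \<le> b" using sig_inv by blast
          moreover have "\<sigma> (Suc i) < ereal u" "ereal u < \<sigma> (Suc (Suc i))" using i(2) by (simp_all add: J_def einterval_def)
          ultimately have "ereal a < ereal u" "ereal u < b"
            by (meson order.strict_trans1 order.strict_trans2)+
          then show ?thesis by (simp add: einterval_def)
        qed
        have rest: "(\<Sum>i'\<in>{..<\<kappa> - 2} - {i}. L i' u) = 0"
        proof (rule sum.neutral, rule ballI)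
          fix i' assume "i' \<in> {..<\<kappa> - 2} - {i}"
          then have "u \<notin> J i'" using disj[OF i(2) _ i(1), of i'] by auto
          then show "L i' u = 0" by (simp add: L_def)
        qed
        have "(\<Sum>i<\<kappa> - 2. L i u) = L i u + (\<Sum>i'\<in>{..<\<kappa> - 2} - {i}. L i' u)"
          by (rule sum.remove) (use i in auto)
        then have s1: "(\<Sum>i<\<kappa> - 2. L i u) = L i u" using rest by simp
        have s2: "L i u = ennreal (k1 u / w1 (ereal (p i)) (ereal u))"
          using i(2) elim W_psd[of "ereal (p i)" "ereal u"] by (simp add: L_def g_def ennreal_mult[symmetric] divide_inverse)
        have ui: "u \<in> einterval (\<sigma> (Suc i)) (\<sigma> (Suc (Suc i)))" using i(2) by (simp add: J_def)
        have s3: "k1 u / w1 (ereal (p (Suc i - 1))) (ereal u) \<le> K u" by (rule K_lower[OF i2(3) i2(1) ui elim])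
        have "(\<Sum>i<\<kappa> - 2. L i u) \<le> ennreal (K u)" using s1 s2 ennreal_leI[OF s3] by simp
        then show ?thesis using uin by simp
      qed
    qed
  qed
  finally show ?thesis .
qed

end

context ham2 begin

lemma ln_delta: "ln \<delta> = ln c - 2 * ln r"
  using cpos rpos by (simp add: \<delta>_def ln_div ln_realpow)

lemma final_lower:
  "ennreal (real \<kappa> * ln 2 - (ln r + ln (2 * T / sqrt c))) \<le> (\<integral>\<^sup>+u. ennreal (K u) * indicator (einterval a b) u \<partial>lborel)"
proof -
  define n where "n = \<kappa> - 2"
  have k2: "2 \<le> \<kappa>" by (rule kap_ge2)
  have xp: "0 < xx i" if "i \<le> n" for i using xx_pos[of i] that k2 by (simp add: n_def)
  have tel: "real n * ln 2 + (ln (xx n) - ln (xx 0)) / 2 \<le> (\<Sum>i<n. ln (xx i + xx (Suc i)) - ln (xx i))"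
    by (rule tele) (use xp in auto)
  have Sn: "Suc n < \<kappa>" using k2 by (simp add: n_def)
  define v where "v = w2 (ereal (p n)) (ereal (p (Suc n)))"
  define A where "A = w1 (ereal a) b"
  define B where "B = w2 (ereal a) b"
  have e: "D (ereal (p n)) (ereal (p (Suc n))) = w1 (ereal (p n)) (ereal (p (Suc n))) * w2 (ereal (p n)) (ereal (p (Suc n))) - (w3 (ereal (p n)) (ereal (p (Suc n))))^2"
    by (rule D_def')
  have "\<delta> \<le> w1 (ereal (p n)) (ereal (p (Suc n))) * w2 (ereal (p n)) (ereal (p (Suc n)))"
    using e D_step[OF Sn] zero_le_power2[of "w3 (ereal (p n)) (ereal (p (Suc n)))"] by linarith
  then have dv: "\<delta> \<le> xx n * v" by (simp add: xx_def v_def)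
  have xn: "0 < xx n" and x0: "0 < xx 0" using xp by auto
  have vpos: "0 < v" using dv dpos xn by (smt (verit) mult_nonpos_nonneg mult_le_0_iff)
  have pn: "ereal a \<le> ereal (p n)" "ereal (p n) \<le> ereal (p (Suc n))" "ereal (p (Suc n)) \<le> b"
    using p_ge_a[of n] Sn sig_lt_Suc[of n] p_eq[of n] p_eq[of "Suc n"] p_lt_b[of "Suc n"] by auto
  have vB: "v \<le> B" unfolding v_def B_def by (rule W_le_T(2)[OF pn])
  have p0: "ereal a \<le> ereal (p 0)" "ereal (p 0) \<le> ereal (p (Suc 0))" "ereal (p (Suc 0)) \<le> b"
    using p_ge_a[of 0] k2 sig_lt_Suc[of 0] p_eq[of 0] p_eq[of "Suc 0"] p_lt_b[of "Suc 0"] by auto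
  have xA: "xx 0 \<le> A" unfolding xx_def A_def by (rule W_le_T(1)[OF p0])
  have Bp: "0 < B" using vpos vB by simp
  have Ap: "0 < A" using x0 xA by simp
  have "4 * (A * B) \<le> (A + B)^2" using zero_le_power2[of "A - B"] by (simp add: algebra_simps power2_eq_square)
  then have "ln (4 * (A * B)) \<le> ln ((A + B)^2)" using Ap Bp by (subst ln_le_cancel_iff) auto
  then have AB: "2 * ln 2 + ln A + ln B \<le> 2 * ln T"
    using Ap Bp ln_realpow[of 2 2] by (simp add: ln_mult ln_realpow A_def B_def)
  have "ln \<delta> \<le> ln (xx n * v)" using dv dpos xn vpos by (subst ln_le_cancel_iff) auto
  then have "ln \<delta> \<le> ln (xx n) + ln v" using xn vpos by (simp add: ln_mult)
  moreover have "ln v \<le> ln B" using vB vpos by simp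
  moreover have "ln (xx 0) \<le> ln A" using xA x0 by simp
  ultimately have "ln \<delta> + 2 * ln 2 - 2 * ln T \<le> ln (xx n) - ln (xx 0)" using AB by linarith
  then have "real n * ln 2 + (ln \<delta> + 2 * ln 2 - 2 * ln T) / 2 \<le> (\<Sum>i<n. ln (xx i + xx (Suc i)) - ln (xx i))"
    using tel by (simp add: field_simps)
  moreover have "real \<kappa> * ln 2 - (ln r + ln (2 * T / sqrt c)) = real n * ln 2 + (ln \<delta> + 2 * ln 2 - 2 * ln T) / 2"
  proof -
    have l1: "ln (2 * T / sqrt c) = ln (2 * T) - ln (sqrt c)" using T_pos(2) cpos by (intro ln_divide_pos) auto
    have l2: "ln (2 * T) = ln 2 + ln T" using T_pos(2) ln_mult[of 2 T] by (simp only:) simp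
    have l3: "ln (sqrt c) = ln c / 2" using cpos by (simp add: ln_sqrt)
    have q1: "ln (2 * T / sqrt c) = ln 2 + ln T - ln c / 2" using l1 l2 l3 by linarith
    have "real n = real \<kappa> - 2" using k2 by (simp add: n_def of_nat_diff)
    then have q2: "real n * ln 2 = real \<kappa> * ln 2 - 2 * ln 2" by (simp only: left_diff_distrib)
    show ?thesis unfolding q1 q2 ln_delta by (simp add: field_simps)
  qed
  ultimately have "ennreal (real \<kappa> * ln 2 - (ln r + ln (2 * T / sqrt c))) \<le> ennreal (\<Sum>i<\<kappa> - 2. ln (xx i + xx (Suc i)) - ln (xx i))"
    by (intro ennreal_leI) (simp add: n_def)
  also have "\<dots> \<le> (\<integral>\<^sup>+u. ennreal (K u) * indicator (einterval a b) u \<partial>lborel)" by (rule lower_total)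
  finally show ?thesis .
qed

lemma final_upper:
  "(\<integral>\<^sup>+u. ennreal (K u) * indicator (einterval a b) u \<partial>lborel) \<le> ennreal (2 * exp 1 * real \<kappa> * (ln r + ln (T / (2 * sqrt c)) + 1))"
proof -
  define Y where "Y = ln r + ln (T / (2 * sqrt c))"
  have sq: "sqrt \<delta> = sqrt c / r" using cpos rpos by (simp add: \<delta>_def real_sqrt_divide)
  have "2 * sqrt c / r \<le> T" using T_pos(1) sq by simp
  then have "1 / r \<le> T / (2 * sqrt c)" using cpos rpos by (simp add: field_simps)
  then have "ln (1 / r) \<le> ln (T / (2 * sqrt c))" using rpos T_pos(2) cpos by (subst ln_le_cancel_iff) auto
  then have Y0: "0 \<le> Y" using rpos by (simp add: Y_def ln_div)
  have lnTm: "ln (T / m) = 2 * Y + 2 * ln 2"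
  proof -
    have "T / m = T * T / \<delta>" using T_pos dpos by (simp add: m_def)
    then have "ln (T / m) = 2 * ln T - ln \<delta>" using T_pos dpos by (simp add: ln_div ln_mult)
    moreover have "ln (T / (2 * sqrt c)) = ln T - ln 2 - ln c / 2"
      using T_pos cpos by (simp add: ln_div ln_mult ln_sqrt)
    ultimately show ?thesis using ln_delta by (simp add: Y_def field_simps)
  qed
  have e2: "2 \<le> exp (1::real)" using exp_ge_add_one_self[of 1] by simp
  have l2: "ln (2::real) \<le> 1" using ln_le_minus_one[of 2] by simp
  have "1 + ln (T / m) \<le> 2 * exp 1 * (Y + 1)"
  proof -
    have "1 + ln (T / m) \<le> 3 + 2 * Y" using lnTm l2 by simp
    also have "\<dots> \<le> 2 * exp 1 + 2 * exp 1 * Y" using e2 Y0 by (intro add_mono mult_right_mono) auto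
    finally show ?thesis by (simp add: algebra_simps)
  qed
  then have "real \<kappa> * (1 + ln (T / m)) \<le> real \<kappa> * (2 * exp 1 * (Y + 1))"
    by (rule mult_left_mono) simp
  then have "real \<kappa> * (1 + ln (T / m)) \<le> 2 * exp 1 * real \<kappa> * (Y + 1)" by (simp add: algebra_simps)
  then have "ennreal (real \<kappa> * (1 + ln (T / m))) \<le> ennreal (2 * exp 1 * real \<kappa> * (Y + 1))" by (rule ennreal_leI)
  moreover have "of_nat \<kappa> * ennreal (1 + ln (T / m)) = ennreal (real \<kappa> * (1 + ln (T / m)))"
    using ennreal_mult[of "real \<kappa>" "1 + ln (T / m)"] lnTm Y0 l2 by (simp add: ennreal_of_nat_eq_real_of_nat)
  ultimately show ?thesis using upper_total by (simp add: Y_def)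
qed

end

lemma rank1:
  fixes x y z cs sn :: real
  assumes "0 \<le> x" "0 \<le> y" "z^2 \<le> x * y" "cs^2 + sn^2 = 1" "x * sn^2 - 2 * z * sn * cs + y * cs^2 = 0"
  shows "x = (x + y) * cs^2 \<and> y = (x + y) * sn^2 \<and> z = (x + y) * (cs * sn)"
proof -
  have e1: "x * (x * sn^2 - 2 * z * sn * cs + y * cs^2) = (x * sn - z * cs)^2 + (x * y - z^2) * cs^2"
    by (simp add: algebra_simps power2_eq_square)
  have e2: "y * (x * sn^2 - 2 * z * sn * cs + y * cs^2) = (y * cs - z * sn)^2 + (x * y - z^2) * sn^2"
    by (simp add: algebra_simps power2_eq_square)
  have n1: "0 \<le> (x * y - z^2) * cs^2" "0 \<le> (x * y - z^2) * sn^2" using assms(3) by auto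
  have "(x * sn - z * cs)^2 + (x * y - z^2) * cs^2 = 0" using e1 assms(5) by simp
  then have "(x * sn - z * cs)^2 = 0" using n1(1) zero_le_power2[of "x * sn - z * cs"] by linarith
  then have a1: "x * sn = z * cs" by simp
  have "(y * cs - z * sn)^2 + (x * y - z^2) * sn^2 = 0" using e2 assms(5) by simp
  then have "(y * cs - z * sn)^2 = 0" using n1(2) zero_le_power2[of "y * cs - z * sn"] by linarith
  then have a2: "y * cs = z * sn" by simp
  have "x = x * (cs^2 + sn^2)" using assms(4) by simp
  also have "\<dots> = x * cs^2 + (x * sn) * sn" by (simp add: algebra_simps power2_eq_square)
  also have "\<dots> = x * cs^2 + cs * (z * sn)" using a1 by (simp add: algebra_simps)
  also have "\<dots> = (x + y) * cs^2" using a2 by (simp add: algebra_simps power2_eq_square)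
  finally have r1: "x = (x + y) * cs^2" .
  have "y = y * (cs^2 + sn^2)" using assms(4) by simp
  also have "\<dots> = (y * cs) * cs + y * sn^2" by (simp add: algebra_simps power2_eq_square)
  also have "\<dots> = sn * (z * cs) + y * sn^2" using a2 by (simp add: algebra_simps)
  also have "\<dots> = (x + y) * sn^2" using a1 by (simp add: algebra_simps power2_eq_square)
  finally have r2: "y = (x + y) * sn^2" .
  have "z = z * (cs^2 + sn^2)" using assms(4) by simp
  also have "\<dots> = (z * cs) * cs + (z * sn) * sn" by (simp add: algebra_simps power2_eq_square)
  also have "\<dots> = (x + y) * (cs * sn)" using a1 a2 by (simp add: algebra_simps)
  finally have r3: "z = (x + y) * (cs * sn)" .
  show ?thesis using r1 r2 r3 by blast
qed

lemma find_phi: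
  fixes A B C :: real
  assumes "0 \<le> A" "0 \<le> B" "A * B = C^2"
  shows "\<exists>\<phi>. A * (sin \<phi>)^2 - 2 * C * sin \<phi> * cos \<phi> + B * (cos \<phi>)^2 = 0"
proof (cases "A = 0")
  case True
  then have "C = 0" using assms by simp
  then show ?thesis using True by (intro exI[of _ "pi / 2"]) simp
next
  case False
  then have Ap: "0 < A" using assms by simp
  define \<rho> where "\<rho> = sqrt (A^2 + C^2)"
  have rp: "0 < \<rho>" using Ap by (simp add: \<rho>_def add_pos_nonneg)
  have r2: "\<rho>^2 = A^2 + C^2" unfolding \<rho>_def by (simp add: add_nonneg_nonneg)
  have "(A / \<rho>)^2 + (C / \<rho>)^2 = (A^2 + C^2) / \<rho>^2" by (simp add: power_divide add_divide_distrib)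
  also have "\<dots> = 1" using rp r2 Ap by simp
  finally have "(A / \<rho>)^2 + (C / \<rho>)^2 = 1" .
  then obtain t where t: "A / \<rho> = cos t" "C / \<rho> = sin t" by (rule sincos_total_2pi)
  have "A * (sin t)^2 - 2 * C * sin t * cos t + B * (cos t)^2
      = (A * C^2 - 2 * C * C * A + B * A^2) / \<rho>^2"
    unfolding t[symmetric] using rp by (simp add: field_simps power2_eq_square)
  also have "A * C^2 - 2 * C * C * A + B * A^2 = A * (A * B - C^2)" by (simp add: algebra_simps power2_eq_square)
  also have "\<dots> = 0" using assms by simp
  finally show ?thesis by auto
qed

context ham begin

lemma D_pos_of_definite:
  assumes def: "\<not> (\<exists>\<phi>::real. AE t in lborel. t \<in> einterval a b \<longrightarrow>
          k1 t = (k1 t + k2 t) * (cos \<phi>)^2 \<and> k2 t = (k1 t + k2 t) * (sin \<phi>)^2 \<and>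
          k3 t = (k1 t + k2 t) * (cos \<phi> * sin \<phi>))"
  shows "0 < D (ereal a) b"
proof (rule ccontr)
  assume "\<not> ?thesis"
  then have D0: "D (ereal a) b = 0" using D_nonneg[of "ereal a" b] by simp
  let ?A = "w1 (ereal a) b" and ?B = "w2 (ereal a) b" and ?C = "w3 (ereal a) b"
  have "?A * ?B = ?C^2" using D0 D_def'[of "ereal a" b] by simp
  then obtain \<phi> where phi: "?A * (sin \<phi>)^2 - 2 * ?C * sin \<phi> * cos \<phi> + ?B * (cos \<phi>)^2 = 0"
    using find_phi[of ?A ?B ?C] W_psd by blast
  define s2 where "s2 = (sin \<phi>)^2"
  define c2 where "c2 = (cos \<phi>)^2"
  define mm where "mm = - 2 * sin \<phi> * cos \<phi>"
  define q where "q u = s2 * k1 u + 1 * (c2 * k2 u + mm * k3 u)" for u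
  have i23: "integrable lborel (\<lambda>u. c2 * k2 u + mm * k3 u)" using int2 int3 by auto
  have iq: "integrable lborel q" unfolding q_def using int1 i23 by auto
  have qnn: "AE u in lborel. 0 \<le> q u"
    using nn1 nn2 psd
  proof eventually_elim
    case (elim u)
    show ?case using quad_nonneg[OF elim, of "sin \<phi>" "- cos \<phi>"] by (simp add: q_def s2_def c2_def mm_def algebra_simps)
  qed
  have "omg q (ereal a) b = s2 * ?A + 1 * omg (\<lambda>u. c2 * k2 u + mm * k3 u) (ereal a) b"
    unfolding q_def by (rule omg_lin[OF int1 i23])
  also have "omg (\<lambda>u. c2 * k2 u + mm * k3 u) (ereal a) b = c2 * ?B + mm * ?C"
    by (rule omg_lin[OF int2 int3])
  finally have "omg q (ereal a) b = 0" using phi by (simp add: s2_def c2_def mm_def algebra_simps)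
  then have "(\<integral>u. indicator (einterval a b) u * q u \<partial>lborel) = 0"
    by (simp add: omg_alt set_lebesgue_integral_def)
  moreover have ii: "integrable lborel (\<lambda>u. indicator (einterval a b) u * q u)"
    using si_of_int[OF iq, of "einterval a b"] by (simp add: set_integrable_def)
  moreover have nnAE: "AE u in lborel. 0 \<le> indicator (einterval a b) u * q u"
    using qnn by eventually_elim (auto split: split_indicator)
  ultimately have z: "AE u in lborel. indicator (einterval a b) u * q u = 0"
    using integral_nonneg_eq_0_iff_AE[OF ii nnAE] by simp
  have "AE t in lborel. t \<in> einterval a b \<longrightarrow>
          k1 t = (k1 t + k2 t) * (cos \<phi>)^2 \<and> k2 t = (k1 t + k2 t) * (sin \<phi>)^2 \<and>
          k3 t = (k1 t + k2 t) * (cos \<phi> * sin \<phi>)"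
    using z nn1 nn2 psd
  proof eventually_elim
    case (elim t)
    show ?case
    proof
      assume "t \<in> einterval a b"
      then have "q t = 0" using elim(1) by simp
      then have "k1 t * (sin \<phi>)^2 - 2 * k3 t * sin \<phi> * cos \<phi> + k2 t * (cos \<phi>)^2 = 0"
        by (simp add: q_def s2_def c2_def mm_def algebra_simps)
      from rank1[OF elim(2,3,4) _ this] show "k1 t = (k1 t + k2 t) * (cos \<phi>)^2 \<and> k2 t = (k1 t + k2 t) * (sin \<phi>)^2 \<and>
          k3 t = (k1 t + k2 t) * (cos \<phi> * sin \<phi>)" by simp
    qed
  qed
  then show False using def by blast
qed

end

lemma omg_restrict:
  assumes "ereal a \<le> s" "t \<le> b"
  shows "omg (\<lambda>x. indicator (hdom a b) x * h x) s t = omg h s t"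
proof -
  have "(LINT x:einterval s t|lborel. indicator (hdom a b) x * h x) = (LINT x:einterval s t|lborel. h x)"
  proof (rule set_lebesgue_integral_cong)
    show "einterval s t \<in> sets lborel" by simp
    show "\<forall>x. x \<in> einterval s t \<longrightarrow> indicator (hdom a b) x * h x = h x"
    proof (intro allI impI)
    fix x assume "x \<in> einterval s t"
    then have x: "s < ereal x" "ereal x < t" unfolding einterval_def by auto
    have "ereal a < ereal x" using assms(1) x(1) by (rule order.strict_trans1)
    moreover have "ereal x < b" using x(2) assms(2) by (rule order.strict_trans2)
    ultimately have "x \<in> hdom a b" unfolding hdom_def by simp
    then show "indicator (hdom a b) x * h x = h x" by simp
    qed
  qed
  then show ?thesis by (simp add: omg_alt)
qed

theorem theorem5p3:
  fixes a c r :: real and b :: ereal and h1 h2 h3 :: "real \<Rightarrow> real"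
  assumes "is_hamiltonian a b h1 h2 h3"
    and "definite_ham a b h1 h2 h3"
    and "limit_circle a b h1 h2"
    and "c > 0"
    and "r > sqrt (c / detOm h1 h2 h3 (ereal a) b)"
  shows "ennreal (real (kappaH a b h1 h2 h3 c r) * ln 2
            - (ln r + ln (2 * (omg h1 (ereal a) b + omg h2 (ereal a) b) / sqrt c)))
           \<le> (\<integral>\<^sup>+ t\<in>hdom a b. ennreal (kernelH a b h1 h2 h3 c t r) \<partial>lborel)
       \<and> (\<integral>\<^sup>+ t\<in>hdom a b. ennreal (kernelH a b h1 h2 h3 c t r) \<partial>lborel)
           \<le> ennreal (2 * exp 1 * real (kappaH a b h1 h2 h3 c r)
            * (ln r + ln ((omg h1 (ereal a) b + omg h2 (ereal a) b) / (2 * sqrt c)) + 1))"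
proof -
  define k1 where "k1 = (\<lambda>x. indicator (hdom a b) x * h1 x)"
  define k2 where "k2 = (\<lambda>x. indicator (hdom a b) x * h2 x)"
  define k3 where "k3 = (\<lambda>x. indicator (hdom a b) x * h3 x)"
  note H = assms(1)[unfolded is_hamiltonian_def]
  have hd: "hdom a b = einterval a b" by (auto simp: hdom_def einterval_def)
  have ab: "ereal a < b" using H by simp
  have m1: "k1 \<in> borel_measurable lborel" using H unfolding k1_def set_borel_measurable_def by simp
  have m2: "k2 \<in> borel_measurable lborel" using H unfolding k2_def set_borel_measurable_def by simp
  have m3: "k3 \<in> borel_measurable lborel" using H unfolding k3_def set_borel_measurable_def by simp
  have AEh: "AE t in lborel. t \<in> hdom a b \<longrightarrow> 0 \<le> h1 t \<and> 0 \<le> h2 t \<and> 0 \<le> h1 t * h2 t - (h3 t)\<^sup>2"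
    using H by blast
  have nullz: "{t \<in> hdom a b. h1 t = 0 \<and> h2 t = 0 \<and> h3 t = 0} \<in> null_sets lborel" using H by blast
  have nn1: "AE x in lborel. 0 \<le> k1 x" using AEh by eventually_elim (auto simp: k1_def split: split_indicator)
  have nn2: "AE x in lborel. 0 \<le> k2 x" using AEh by eventually_elim (auto simp: k2_def split: split_indicator)
  have psd: "AE x in lborel. (k3 x)^2 \<le> k1 x * k2 x"
    using AEh by eventually_elim (auto simp: k1_def k2_def k3_def split: split_indicator)
  have pos: "AE x in lborel. x \<in> einterval a b \<longrightarrow> 0 < k1 x + k2 x"
    using AEh AE_not_in[OF nullz]
  proof eventually_elim
    case (elim x)
    show ?case
    proof
      assume "x \<in> einterval a b"
      then have xh: "x \<in> hdom a b" using hd by simp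
      have ge: "0 \<le> h1 x" "0 \<le> h2 x" "(h3 x)^2 \<le> h1 x * h2 x" using elim(1) xh by auto
      show "0 < k1 x + k2 x"
      proof (rule ccontr)
        assume "\<not> 0 < k1 x + k2 x"
        then have "h1 x = 0" "h2 x = 0" using ge xh by (auto simp: k1_def k2_def)
        then have "h3 x = 0" using ge by simp
        then show False using elim(2) xh \<open>h1 x = 0\<close> \<open>h2 x = 0\<close> by simp
      qed
    qed
  qed
  have lc: "(\<integral>\<^sup>+ t. ennreal (h1 t + h2 t) * indicator (hdom a b) t \<partial>lborel) < \<infinity>"
    using assms(3) by (simp add: limit_circle_def)
  have bound: "(\<integral>\<^sup>+ x. ennreal (norm (k x)) \<partial>lborel) < \<infinity>"
    if kk: "k = (\<lambda>x. indicator (hdom a b) x * h x)" and hb: "AE t in lborel. t \<in> hdom a b \<longrightarrow> \<bar>h t\<bar> \<le> h1 t + h2 t" for k h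
  proof -
    have "(\<integral>\<^sup>+ x. ennreal (norm (k x)) \<partial>lborel) \<le> (\<integral>\<^sup>+ t. ennreal (h1 t + h2 t) * indicator (hdom a b) t \<partial>lborel)"
      by (rule nn_integral_mono_AE) (use hb in \<open>eventually_elim, auto simp: kk split: split_indicator intro: ennreal_leI\<close>)
    then show ?thesis using lc by (simp add: order.strict_trans1)
  qed
  have int1: "integrable lborel k1"
    by (rule integrableI_bounded[OF m1 bound[OF k1_def]]) (use AEh in \<open>eventually_elim, auto\<close>)
  have int2: "integrable lborel k2"
    by (rule integrableI_bounded[OF m2 bound[OF k2_def]]) (use AEh in \<open>eventually_elim, auto\<close>)
  have h3b: "AE t in lborel. t \<in> hdom a b \<longrightarrow> \<bar>h3 t\<bar> \<le> h1 t + h2 t"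
    using AEh
  proof eventually_elim
    case (elim t)
    show ?case
    proof
      assume "t \<in> hdom a b"
      then have ge: "0 \<le> h1 t" "0 \<le> h2 t" "(h3 t)^2 \<le> h1 t * h2 t" using elim by auto
      have sq: "(h1 t + h2 t)^2 = h1 t * h1 t + h2 t * h2 t + 2 * (h1 t * h2 t)"
        by (simp add: power2_eq_square algebra_simps)
      have "(h3 t)^2 \<le> (h1 t + h2 t)^2"
        using ge(3) mult_nonneg_nonneg[OF ge(1) ge(1)] mult_nonneg_nonneg[OF ge(2) ge(2)]
          mult_nonneg_nonneg[OF ge(1) ge(2)] unfolding sq by linarith
      then show "\<bar>h3 t\<bar> \<le> h1 t + h2 t" using ge by (simp add: abs_le_square_iff[symmetric])
    qed
  qed
  have int3: "integrable lborel k3"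
    by (rule integrableI_bounded[OF m3 bound[OF k3_def h3b]])
  interpret ham a b k1 k2 k3
    by unfold_locales (use ab int1 int2 int3 nn1 nn2 psd pos in auto)
  have omg_eq: "omg h1 s t = w1 s t" "omg h2 s t = w2 s t" "omg h3 s t = w3 s t" if "ereal a \<le> s" "t \<le> b" for s t
    using omg_restrict[OF that] unfolding k1_def k2_def k3_def by metis+
  have det_eq: "detOm h1 h2 h3 s t = D s t" if "ereal a \<le> s" "t \<le> b" for s t
    using omg_eq[OF that] by (simp add: detOm_def)
  have Dpos: "0 < D (ereal a) b"
  proof (rule D_pos_of_definite, rule notI)
    assume "\<exists>\<phi>::real. AE t in lborel. t \<in> einterval a b \<longrightarrow>
          k1 t = (k1 t + k2 t) * (cos \<phi>)^2 \<and> k2 t = (k1 t + k2 t) * (sin \<phi>)^2 \<and>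
          k3 t = (k1 t + k2 t) * (cos \<phi> * sin \<phi>)"
    then obtain \<phi> :: real where phi: "AE t in lborel. t \<in> einterval a b \<longrightarrow>
          k1 t = (k1 t + k2 t) * (cos \<phi>)^2 \<and> k2 t = (k1 t + k2 t) * (sin \<phi>)^2 \<and>
          k3 t = (k1 t + k2 t) * (cos \<phi> * sin \<phi>)" by blast
    have "AE t in lborel. t \<in> hdom a b \<longrightarrow>
          h1 t = (h1 t + h2 t) * (cos \<phi>)\<^sup>2 \<and>
          h2 t = (h1 t + h2 t) * (sin \<phi>)\<^sup>2 \<and>
          h3 t = (h1 t + h2 t) * (cos \<phi> * sin \<phi>)"
      using phi by eventually_elim (auto simp: hd k1_def k2_def k3_def)
    then show False using assms(2) unfolding definite_ham_def by blast
  qed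
  have Dab: "detOm h1 h2 h3 (ereal a) b = D (ereal a) b" by (rule det_eq) auto
  have sq0: "0 < sqrt (c / D (ereal a) b)" using Dpos assms(4) by simp
  have "sqrt (c / D (ereal a) b) < r" using assms(5) Dab by simp
  with sq0 have rpos: "0 < r" by (rule order.strict_trans)
  have "(sqrt (c / D (ereal a) b))^2 < r^2"
    using assms(5) sq0 Dab by (intro power_strict_mono) auto
  then have "c / D (ereal a) b < r^2" using Dpos assms(4) by simp
  then have dlt: "c / r^2 < D (ereal a) b" using Dpos rpos by (simp add: field_simps)
  interpret ham2 a b k1 k2 k3 c r
    by unfold_locales (use assms(4) rpos dlt in auto)
  have sig_eq: "sigma_seq a b h1 h2 h3 c r j = \<sigma> j" for j
  proof (induction j)
    case 0 then show ?case by simp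
  next
    case (Suc j)
    define s where "s = \<sigma> j"
    have s: "ereal a \<le> s" "s \<le> b" using sig_inv[of j] by (auto simp: s_def)
    have d1: "detOm h1 h2 h3 s b = D s b" by (rule det_eq) (use s in auto)
    have "(\<lambda>x. s < ereal x \<and> ereal x < b \<and> detOm h1 h2 h3 s (ereal x) = c / r^2)
        = (\<lambda>x. s < ereal x \<and> ereal x < b \<and> D s (ereal x) = c / r^2)"
    proof (rule ext)
      fix x
      show "(s < ereal x \<and> ereal x < b \<and> detOm h1 h2 h3 s (ereal x) = c / r^2)
          = (s < ereal x \<and> ereal x < b \<and> D s (ereal x) = c / r^2)"
        using det_eq[OF s(1), of "ereal x"] by (auto simp: less_imp_le)
    qed
    then have th: "(THE x. s < ereal x \<and> ereal x < b \<and> detOm h1 h2 h3 s (ereal x) = c / r^2)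
        = (THE x. s < ereal x \<and> ereal x < b \<and> D s (ereal x) = c / r^2)" by simp
    have "sigma_seq a b h1 h2 h3 c r (Suc j) = (if c / r^2 < detOm h1 h2 h3 s b
       then ereal (THE x. s < ereal x \<and> ereal x < b \<and> detOm h1 h2 h3 s (ereal x) = c / r^2) else b)"
      by (simp add: Let_def Suc.IH s_def)
    also have "\<dots> = (if c / r^2 < D s b
       then ereal (THE x. s < ereal x \<and> ereal x < b \<and> D s (ereal x) = c / r^2) else b)"
      by (simp only: d1 th)
    also have "\<dots> = \<sigma> (Suc j)" by (simp add: Let_def s_def)
    finally show ?case .
  qed
  have kap_eq: "kappaH a b h1 h2 h3 c r = \<kappa>"
    unfolding \<kappa>_def kappaH_def using sig_eq by simp
  have T_eq: "omg h1 (ereal a) b + omg h2 (ereal a) b = T" using omg_eq[of "ereal a" b] by simp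
  have that_eq: "that_fn a b h1 h2 h3 c r = tt"
  proof -
    have "(\<lambda>t. a < t \<and> ereal t < b \<and> detOm h1 h2 h3 (ereal a) (ereal t) = c / r\<^sup>2)
        = (\<lambda>t. a < t \<and> ereal t < b \<and> D (ereal a) (ereal t) = c / r\<^sup>2)"
      by (rule ext) (use det_eq[of "ereal a"] in \<open>auto simp: less_imp_le\<close>)
    then show ?thesis by (simp add: that_fn_def tt_def)
  qed
  have shat_eq: "shat_fn a h1 h2 h3 c t r = sh t" if "ereal t < b" for t
  proof -
    have "(\<lambda>s. a \<le> s \<and> s \<le> t \<and> detOm h1 h2 h3 (ereal s) (ereal t) = c / r\<^sup>2)
        = (\<lambda>s. a \<le> s \<and> s \<le> t \<and> D (ereal s) (ereal t) = c / r\<^sup>2)"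
      by (rule ext) (use det_eq that in \<open>auto simp: less_imp_le\<close>)
    then show ?thesis by (simp add: shat_fn_def sh_def)
  qed
  have ker_eq: "kernelH a b h1 h2 h3 c t r = K t" if t: "t \<in> hdom a b" for t
  proof -
    have tb: "a < t" "ereal t < b" using t by (auto simp: hdom_def)
    have h1t: "h1 t = k1 t" using t by (simp add: k1_def)
    show ?thesis
    proof (cases "t < tt")
      case True
      then show ?thesis using that_eq h1t omg_eq[of "ereal a" "ereal t"] tb
        by (simp add: kernelH_def tt_def less_imp_le)
    next
      case False
      have "a \<le> sh t" using sh_props(1)[of t] False tb by simp
      then show ?thesis using False that_eq h1t shat_eq[OF tb(2)] omg_eq(1)[of "ereal (sh t)" "ereal t"] tb
        by (simp add: kernelH_def tt_def sh_def less_imp_le)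
    qed
  qed
  have int_eq: "(\<integral>\<^sup>+ t\<in>hdom a b. ennreal (kernelH a b h1 h2 h3 c t r) \<partial>lborel)
      = (\<integral>\<^sup>+u. ennreal (K u) * indicator (einterval a b) u \<partial>lborel)"
    by (rule nn_integral_cong) (auto simp: hd[symmetric] ker_eq split: split_indicator)
  show ?thesis
    unfolding int_eq kap_eq T_eq using final_lower final_upper by simp
qed


end
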